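(* For all dyadic intervals $I,J$ of $\mathbb{R}$, \[ \int_{\mathbb{C}_+}f_I(x+iy)\overline{f_J(x+iy)}\,y\,dx\,dy=|I|\,\delta_{IJ}. \]
   Context: Dyadic intervals of $\mathbb{R}$ are $[2^{-j}k,2^{-j}(k+1))$, $j,k\in\mathbb{Z}$; $|I|$ is the length and $C_I$ the center; $\delta_{IJ}$ is the Kronecker delta. Let $\psi$ be an even Schwartz function with $\hat\psi\ge0$, $\operatorname{supp}\hat\psi\subset[-4/3,-1/3]\cup[1/3,4/3]$, $\hat\psi>0$ on $[3/8,5/4]$, such that $\psi_I(x)=|I|^{-1/2}\psi((x-C_I)/|I|)$, $I$ ranging over dyadic intervals, form an orthonormal basis of $L^2(\mathbb{R})$ (Fourier transform $\hat f(\xi)=\int f(x)e^{-2\pi ix\xi}dx$). $D$ is the Fourier multiplier $\widehat{Df}(\xi)=4\pi|\xi|\hat f(\xi)$. Set $f_I=|I|^{1/2}D\psi_I$, extended to $\mathbb{C}_+=\{x+iy:y>0\}$ by Poisson extension $f_I(x+iy)=\int_{\mathbb{R}}f_I(t)\frac{1}{\pi}\frac{y}{(x-t)^2+y^2}dt$. *)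

theory Defs
  imports "HOL-Analysis.Analysis"
begin

definition fourier :: "(real \<Rightarrow> complex) \<Rightarrow> real \<Rightarrow> complex" where
  "fourier f \<xi> = (LINT x|lborel. f x * cis (- 2 * pi * x * \<xi>))"

definition inv_fourier :: "(real \<Rightarrow> complex) \<Rightarrow> real \<Rightarrow> complex" where
  "inv_fourier g x = (LINT \<xi>|lborel. g \<xi> * cis (2 * pi * x * \<xi>))"

definition schwartz :: "(real \<Rightarrow> complex) \<Rightarrow> bool" where
  "schwartz f \<longleftrightarrow> (\<exists>F :: nat \<Rightarrow> real \<Rightarrow> complex.
      F 0 = f \<and>
      (\<forall>n x. (F n has_vector_derivative F (Suc n) x) (at x)) \<and>
      (\<forall>k n. \<exists>C. \<forall>x. \<bar>x\<bar> ^ k * norm (F n x) \<le> C))"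

definition square_integrable :: "(real \<Rightarrow> complex) \<Rightarrow> bool" where
  "square_integrable f \<longleftrightarrow> f \<in> borel_measurable lborel \<and> integrable lborel (\<lambda>x. (norm (f x))\<^sup>2)"

definition L2_inner :: "(real \<Rightarrow> complex) \<Rightarrow> (real \<Rightarrow> complex) \<Rightarrow> complex" where
  "L2_inner f g = (LINT x|lborel. f x * cnj (g x))"

definition L2_orthonormal_basis :: "'i set \<Rightarrow> ('i \<Rightarrow> real \<Rightarrow> complex) \<Rightarrow> bool" where
  "L2_orthonormal_basis A e \<longleftrightarrow>
     (\<forall>i\<in>A. square_integrable (e i)) \<and>
     (\<forall>i\<in>A. \<forall>j\<in>A. L2_inner (e i) (e j) = (if i = j then 1 else 0)) \<and>
     (\<forall>f. square_integrable f \<longrightarrow> (\<forall>i\<in>A. L2_inner f (e i) = 0) \<longrightarrow>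
          (AE x in lborel. f x = 0))"

text \<open>Dyadic intervals \<open>[2^{-j} k, 2^{-j}(k+1))\<close> are indexed by \<open>(j,k) \<in> Z \<times> Z\<close>;
  distinct pairs give distinct intervals.\<close>
definition dyadic_interval :: "int \<times> int \<Rightarrow> real set" where
  "dyadic_interval I = (case I of (j,k) \<Rightarrow> {2 powr (- j) * k ..< 2 powr (- j) * (k + 1)})"

definition dlen :: "int \<times> int \<Rightarrow> real" where
  "dlen I = (case I of (j,k) \<Rightarrow> 2 powr (- real_of_int j))"

definition dcenter :: "int \<times> int \<Rightarrow> real" where
  "dcenter I = (case I of (j,k) \<Rightarrow> 2 powr (- real_of_int j) * (real_of_int k + 1/2))"

definition psi_I :: "(real \<Rightarrow> complex) \<Rightarrow> int \<times> int \<Rightarrow> real \<Rightarrow> complex" where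
  "psi_I \<psi> I x = complex_of_real (dlen I powr (-1/2)) * \<psi> ((x - dcenter I) / dlen I)"

definition Dop :: "(real \<Rightarrow> complex) \<Rightarrow> real \<Rightarrow> complex" where
  "Dop f = inv_fourier (\<lambda>\<xi>. complex_of_real (4 * pi * \<bar>\<xi>\<bar>) * fourier f \<xi>)"

definition f_I :: "(real \<Rightarrow> complex) \<Rightarrow> int \<times> int \<Rightarrow> real \<Rightarrow> complex" where
  "f_I \<psi> I x = complex_of_real (sqrt (dlen I)) * Dop (psi_I \<psi> I) x"

definition poisson_ext :: "(real \<Rightarrow> complex) \<Rightarrow> complex \<Rightarrow> complex" where
  "poisson_ext f z = (LINT t|lborel. f t * complex_of_real (1 / pi * Im z / ((Re z - t)\<^sup>2 + (Im z)\<^sup>2)))"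

definition upper_half_plane :: "complex set" where
  "upper_half_plane = {z. 0 < Im z}"

end

theory Submission
  imports Defs "HOL-Probability.Probability"
begin

lemma std_char:
  "(LINT x|lborel. complex_of_real (std_normal_density x) * cis (t * x)) = complex_of_real (exp (- (t^2) / 2))"
proof -
  have "char std_normal_distribution t = complex_of_real (exp (- (t^2) / 2))"
    by (simp add: char_std_normal_distribution)
  moreover have "char std_normal_distribution t = (LINT x|lborel. std_normal_density x *\<^sub>R exp (\<i> * complex_of_real (t * x)))"
    unfolding char_def by (subst integral_density) (simp_all add: normal_density_nonneg)
  ultimately show ?thesis by (simp add: cis_conv_exp scaleR_conv_of_real mult.commute)
qed

lemma std_char_int: "integrable lborel (\<lambda>x. complex_of_real (std_normal_density x) * cis (t * x))"
proof -
  have "integrable lborel (\<lambda>x. complex_of_real (std_normal_density x))"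
    by (rule integrable_of_real) simp
  then show ?thesis
    by (rule Bochner_Integration.integrable_bound) (auto simp: norm_mult norm_divide normal_density_def intro!: borel_measurable_continuous_onI continuous_intros)
qed

lemma gauss_ft:
  fixes a \<xi> :: real assumes a: "a > 0"
  shows "integrable lborel (\<lambda>x. complex_of_real (exp (-pi*a*x^2)) * cis (2*pi*x*\<xi>))"
    and "(LINT x|lborel. complex_of_real (exp (-pi*a*x^2)) * cis (2*pi*x*\<xi>)) = complex_of_real (exp (-pi*\<xi>^2/a) / sqrt a)"
proof -
  define c where "c = sqrt (2*pi*a)"
  have c: "c > 0" using a by (simp add: c_def)
  define t where "t = 2*pi*\<xi>/c"
  have eq: "complex_of_real (std_normal_density (0 + c * y)) * cis (t * (0 + c*y))
     = complex_of_real (1 / sqrt (2*pi)) * (complex_of_real (exp (-pi*a*y^2)) * cis (2*pi*y*\<xi>))" for y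
  proof -
    have e1: "(0 + c*y)^2/2 = pi*a*y^2" using a by (simp add: c_def power_mult_distrib)
    have e2: "t*(0 + c*y) = 2*pi*y*\<xi>" using c by (simp add: t_def)
    show ?thesis unfolding std_normal_density_def e2 minus_divide_left[symmetric] e1 by simp
  qed
  have i1: "integrable lborel (\<lambda>y. complex_of_real (std_normal_density (0 + c * y)) * cis (t * (0 + c*y)))"
    using std_char_int[of t] c by (subst lborel_integrable_real_affine_iff) auto
  then have "integrable lborel (\<lambda>y. complex_of_real (1 / sqrt (2*pi)) * (complex_of_real (exp (-pi*a*y^2)) * cis (2*pi*y*\<xi>)))"
    by (simp only: eq)
  then have "integrable lborel (\<lambda>y. complex_of_real (sqrt (2*pi)) * (complex_of_real (1 / sqrt (2*pi)) * (complex_of_real (exp (-pi*a*y^2)) * cis (2*pi*y*\<xi>))))"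
    by (rule integrable_mult_right)
  moreover have "(\<lambda>y. complex_of_real (sqrt (2*pi)) * (complex_of_real (1 / sqrt (2*pi)) * (complex_of_real (exp (-pi*a*y^2)) * cis (2*pi*y*\<xi>))))
      = (\<lambda>x. complex_of_real (exp (-pi*a*x^2)) * cis (2*pi*x*\<xi>))"
    by (rule ext) (simp add: field_simps)
  ultimately show "integrable lborel (\<lambda>x. complex_of_real (exp (-pi*a*x^2)) * cis (2*pi*x*\<xi>))"
    by simp
  have "complex_of_real (exp (- (t^2) / 2)) = (LINT x|lborel. complex_of_real (std_normal_density x) * cis (t * x))"
    by (rule std_char[symmetric])
  also have "\<dots> = c *\<^sub>R (LINT y|lborel. complex_of_real (std_normal_density (0 + c * y)) * cis (t * (0 + c*y)))"
    using c by (subst lborel_integral_real_affine[where c=c and t=0]) auto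
  also have "\<dots> = c *\<^sub>R (complex_of_real (1 / sqrt (2*pi)) * (LINT y|lborel. complex_of_real (exp (-pi*a*y^2)) * cis (2*pi*y*\<xi>)))"
    by (simp only: eq integral_mult_right_zero)
  finally have "(LINT y|lborel. complex_of_real (exp (-pi*a*y^2)) * cis (2*pi*y*\<xi>)) = complex_of_real (exp (- (t^2) / 2) * sqrt (2*pi) / c)"
    using c by (simp add: scaleR_conv_of_real field_simps)
  also have "exp (- (t^2) / 2) * sqrt (2*pi) / c = exp (-pi*\<xi>^2/a) / sqrt a"
  proof -
    have h1: "t^2/2 = pi*\<xi>^2/a" using a by (simp add: t_def c_def power_divide power_mult_distrib field_simps power2_eq_square)
    have h2: "sqrt (2*pi) / c = 1 / sqrt a" using a by (simp add: c_def real_sqrt_mult field_simps)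
    have "exp (- (t^2) / 2) * sqrt (2*pi) / c = exp (- (t^2/2)) * (sqrt (2*pi) / c)" by simp
    also have "\<dots> = exp (-pi*\<xi>^2/a) * (1 / sqrt a)" by (simp only: h1 h2) simp
    finally show ?thesis by simp
  qed
  finally show "(LINT x|lborel. complex_of_real (exp (-pi*a*x^2)) * cis (2*pi*x*\<xi>)) = complex_of_real (exp (-pi*\<xi>^2/a) / sqrt a)" .
qed

lemma swap_int:
  fixes f g :: "real \<Rightarrow> complex" and k :: "real \<times> real \<Rightarrow> complex"
  assumes f: "integrable lborel f" and g: "integrable lborel g"
    and km[measurable]: "k \<in> borel_measurable borel" and kb: "\<And>p. norm (k p) \<le> 1"
  shows "integrable (lborel \<Otimes>\<^sub>M lborel) (\<lambda>(x,\<xi>). g x * (f \<xi> * k (x,\<xi>)))"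
    and "(LINT x|lborel. g x * (LINT \<xi>|lborel. f \<xi> * k (x,\<xi>))) = (LINT \<xi>|lborel. f \<xi> * (LINT x|lborel. g x * k (x,\<xi>)))"
proof -
  have [measurable]: "f \<in> borel_measurable borel" "g \<in> borel_measurable borel"
    using f g by (auto simp: borel_measurable_integrable)
  have nf: "integrable lborel (\<lambda>\<xi>. norm (f \<xi>))" using f by simp
  have ng: "integrable lborel (\<lambda>x. norm (g x))" using g by simp
  have i1: "integrable lborel (\<lambda>\<xi>. f \<xi> * k (x,\<xi>))" for x
    by (rule Bochner_Integration.integrable_bound[OF f]) (auto simp: norm_mult intro!: mult_left_le[OF kb])
  have i1': "integrable lborel (\<lambda>\<xi>. g x * (f \<xi> * k (x,\<xi>)))" for x
    using i1 by (rule integrable_mult_right)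
  have mes: "(\<lambda>(x,\<xi>). g x * (f \<xi> * k (x,\<xi>))) \<in> borel_measurable (lborel \<Otimes>\<^sub>M lborel)"
    by measurable
  have "integrable lborel (\<lambda>x. LINT \<xi>|lborel. norm (g x * (f \<xi> * k (x,\<xi>))))"
  proof (rule Bochner_Integration.integrable_bound[OF integrable_mult_left[OF ng, of "LINT \<xi>|lborel. norm (f \<xi>)"]])
    show "(\<lambda>x. LINT \<xi>|lborel. norm (g x * (f \<xi> * k (x,\<xi>)))) \<in> borel_measurable lborel"
      by measurable
    show "AE x in lborel. norm (LINT \<xi>|lborel. norm (g x * (f \<xi> * k (x,\<xi>)))) \<le> norm (norm (g x) * (LINT \<xi>|lborel. norm (f \<xi>)))"
    proof (rule AE_I2)
      fix x
      have "norm (LINT \<xi>|lborel. norm (g x * (f \<xi> * k (x,\<xi>)))) = (LINT \<xi>|lborel. norm (g x * (f \<xi> * k (x,\<xi>))))"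
        by (simp add: integral_nonneg_AE)
      also have "\<dots> \<le> (LINT \<xi>|lborel. norm (g x) * norm (f \<xi>))"
        by (rule integral_mono[OF integrable_norm[OF i1'[of x]] integrable_mult_right[OF nf]]) (auto simp: norm_mult intro!: mult_left_mono mult_left_le[OF kb])
      also have "\<dots> = norm (norm (g x) * (LINT \<xi>|lborel. norm (f \<xi>)))"
        by (simp add: integral_nonneg_AE)
      finally show "norm (LINT \<xi>|lborel. norm (g x * (f \<xi> * k (x,\<xi>)))) \<le> norm (norm (g x) * (LINT \<xi>|lborel. norm (f \<xi>)))" .
    qed
  qed
  then show int: "integrable (lborel \<Otimes>\<^sub>M lborel) (\<lambda>(x,\<xi>). g x * (f \<xi> * k (x,\<xi>)))"
    using i1' by (intro lborel_pair.Fubini_integrable[OF mes]) auto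
  have "(LINT x|lborel. g x * (LINT \<xi>|lborel. f \<xi> * k (x,\<xi>))) = (LINT x|lborel. LINT \<xi>|lborel. g x * (f \<xi> * k (x,\<xi>)))"
    by simp
  also have "\<dots> = (LINT \<xi>|lborel. LINT x|lborel. g x * (f \<xi> * k (x,\<xi>)))"
    using lborel_pair.Fubini_integral[of "\<lambda>x \<xi>. g x * (f \<xi> * k (x,\<xi>))"] int by simp
  also have "\<dots> = (LINT \<xi>|lborel. f \<xi> * (LINT x|lborel. g x * k (x,\<xi>)))"
    by (intro Bochner_Integration.integral_cong refl) (simp flip: integral_mult_right_zero add: mult_ac)
  finally show "(LINT x|lborel. g x * (LINT \<xi>|lborel. f \<xi> * k (x,\<xi>))) = (LINT \<xi>|lborel. f \<xi> * (LINT x|lborel. g x * k (x,\<xi>)))" .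
qed

definition gk :: "real \<Rightarrow> real \<Rightarrow> real" where "gk \<epsilon> u = exp (-pi*u^2/\<epsilon>) / sqrt \<epsilon>"
definition ee :: "nat \<Rightarrow> real" where "ee n = 1 / real (Suc n)"

lemma ee_pos: "ee n > 0" by (simp add: ee_def)
lemma ee_lim: "ee \<longlonglongrightarrow> 0"
  unfolding ee_def using LIMSEQ_Suc[OF lim_inverse_n'] by (simp add: inverse_eq_divide)
lemma ee_dec: "decseq ee"
  unfolding ee_def by (intro decseq_SucI) (simp add: frac_le)

lemma gk_ft: assumes "\<epsilon> > 0"
  shows "(LINT x|lborel. complex_of_real (exp (-pi*\<epsilon>*x^2)) * cis (2*pi*x*\<xi>)) = complex_of_real (gk \<epsilon> \<xi>)"
  using gauss_ft(2)[OF assms, of \<xi>] by (simp add: gk_def)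

lemma gauss_int: assumes "a > 0" shows "integrable lborel (\<lambda>x. complex_of_real (exp (-pi*a*x^2)))"
  using gauss_ft(1)[OF assms, of 0] by simp

lemma gauss_one: "(LINT x|lborel. complex_of_real (exp (-pi*x^2))) = 1"
  using gauss_ft(2)[of 1 0] by simp

lemma gauss_int1: "integrable lborel (\<lambda>x. exp (-pi*x^2))"
  using gauss_int[of 1] by (simp add: complex_of_real_integrable_eq)

lemma cis_meas[measurable]: "cis \<in> borel_measurable borel"
  by (intro borel_measurable_continuous_onI continuous_intros)

lemma cnj_meas[measurable]: "cnj \<in> borel_measurable borel"
  by (intro borel_measurable_continuous_onI continuous_intros)

lemma inv_fourier_meas[measurable]:
  assumes [measurable]: "F \<in> borel_measurable borel"
  shows "inv_fourier F \<in> borel_measurable borel"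
  unfolding inv_fourier_def[abs_def] by measurable

lemma inv_fourier_bound:
  assumes "integrable lborel F"
  shows "norm (inv_fourier F x) \<le> (LINT \<xi>|lborel. norm (F \<xi>))"
  unfolding inv_fourier_def
  by (rule order_trans[OF integral_norm_bound]) (simp add: norm_mult)

lemma smooth_id:
  fixes F :: "real \<Rightarrow> complex"
  assumes F: "integrable lborel F" and e: "\<epsilon> > 0"
  shows "(LINT x|lborel. inv_fourier F x * complex_of_real (exp (-pi*\<epsilon>*x^2)) * cis (-2*pi*x*\<eta>))
       = (LINT \<xi>|lborel. F \<xi> * complex_of_real (gk \<epsilon> (\<xi> - \<eta>)))"
proof -
  let ?g = "\<lambda>x. complex_of_real (exp (-pi*\<epsilon>*x^2))"
  let ?k = "\<lambda>p. cis (2*pi*fst p*(snd p - \<eta>))"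
  have km: "?k \<in> borel_measurable borel" by (intro borel_measurable_continuous_onI continuous_intros)
  have "(LINT x|lborel. inv_fourier F x * ?g x * cis (-2*pi*x*\<eta>)) = (LINT x|lborel. ?g x * (LINT \<xi>|lborel. F \<xi> * ?k (x,\<xi>)))"
  proof (intro Bochner_Integration.integral_cong refl)
    fix x
    have "inv_fourier F x * cis (-2*pi*x*\<eta>) = (LINT \<xi>|lborel. F \<xi> * cis (2*pi*x*\<xi>) * cis (-2*pi*x*\<eta>))"
      unfolding inv_fourier_def by simp
    also have "\<dots> = (LINT \<xi>|lborel. F \<xi> * ?k (x,\<xi>))"
      by (intro Bochner_Integration.integral_cong refl) (simp add: mult.assoc cis_mult algebra_simps)
    finally show "inv_fourier F x * ?g x * cis (-2*pi*x*\<eta>) = ?g x * (LINT \<xi>|lborel. F \<xi> * ?k (x,\<xi>))"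
      by (simp add: mult_ac)
  qed
  also have "\<dots> = (LINT \<xi>|lborel. F \<xi> * (LINT x|lborel. ?g x * ?k (x,\<xi>)))"
    using swap_int(2)[OF F gauss_int[OF e] km] by simp
  also have "\<dots> = (LINT \<xi>|lborel. F \<xi> * complex_of_real (gk \<epsilon> (\<xi> - \<eta>)))"
  proof (intro Bochner_Integration.integral_cong refl)
    fix \<xi>
    show "F \<xi> * (LINT x|lborel. ?g x * ?k (x,\<xi>)) = F \<xi> * complex_of_real (gk \<epsilon> (\<xi> - \<eta>))"
      using gk_ft[OF e, of "\<xi> - \<eta>"] by (simp add: mult.assoc)
  qed
  finally show ?thesis .
qed

lemma approx_id:
  fixes G :: "real \<Rightarrow> complex"
  assumes Gm[measurable]: "G \<in> borel_measurable borel" and bnd: "\<And>x. norm (G x) \<le> M" and cont: "isCont G \<xi>0"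
  shows "(\<lambda>n. LINT \<eta>|lborel. G \<eta> * complex_of_real (gk (ee n) (\<eta> - \<xi>0))) \<longlonglongrightarrow> G \<xi>0"
proof -
  define r where "r n = sqrt (ee n)" for n
  have r: "r n > 0" for n using ee_pos by (simp add: r_def)
  have rr: "r n ^ 2 = ee n" for n using ee_pos[of n] by (simp add: r_def less_imp_le)
  have eq: "(LINT \<eta>|lborel. G \<eta> * complex_of_real (gk (ee n) (\<eta> - \<xi>0)))
      = (LINT v|lborel. G (\<xi>0 + r n * v) * complex_of_real (exp (-pi* v^2)))" for n
  proof -
    have "(LINT \<eta>|lborel. G \<eta> * complex_of_real (gk (ee n) (\<eta> - \<xi>0)))
        = \<bar>r n\<bar> *\<^sub>R (LINT v|lborel. G (\<xi>0 + r n * v) * complex_of_real (gk (ee n) (\<xi>0 + r n * v - \<xi>0)))"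
      using r[of n] by (subst lborel_integral_real_affine[where c="r n" and t=\<xi>0]) auto
    also have "\<dots> = (LINT v|lborel. G (\<xi>0 + r n * v) * complex_of_real (exp (-pi* v^2)))"
    proof -
      have "r n * gk (ee n) (\<xi>0 + r n * v - \<xi>0) = exp (-pi* v^2)" for v
      proof -
        have "r n * gk (ee n) (\<xi>0 + r n * v - \<xi>0) = exp (-pi*((r n * v)^2/ee n)) * (r n / sqrt (ee n))"
          by (simp add: gk_def)
        also have "(r n * v)^2 / ee n = v^2" using rr[of n] ee_pos[of n] by (simp add: power_mult_distrib)
        also have "r n / sqrt (ee n) = 1" using r[of n] by (simp add: r_def)
        finally show ?thesis by simp
      qed
      then show ?thesis using r[of n]
        by (simp add: scaleR_conv_of_real flip: integral_mult_right_zero)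
           (intro Bochner_Integration.integral_cong refl, simp add: mult_ac flip: of_real_mult)
    qed
    finally show ?thesis .
  qed
  have rlim: "r \<longlonglongrightarrow> 0"
    unfolding r_def using tendsto_real_sqrt[OF ee_lim] by simp
  have "(\<lambda>n. LINT v|lborel. G (\<xi>0 + r n * v) * complex_of_real (exp (-pi* v^2)))
      \<longlonglongrightarrow> (LINT v|lborel. G \<xi>0 * complex_of_real (exp (-pi* v^2)))"
  proof (rule integral_dominated_convergence[where w="\<lambda>v. M * exp (-pi* v^2)"])
    show "integrable lborel (\<lambda>v. M * exp (-pi* v^2))" using gauss_int1 by simp
    show "AE v in lborel. (\<lambda>n. G (\<xi>0 + r n * v) * complex_of_real (exp (-pi* v^2))) \<longlonglongrightarrow> G \<xi>0 * complex_of_real (exp (-pi* v^2))"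
    proof (rule AE_I2, rule tendsto_mult_right)
      fix v
      have "(\<lambda>n. \<xi>0 + r n * v) \<longlonglongrightarrow> \<xi>0 + 0 * v"
        by (intro tendsto_intros rlim)
      then show "(\<lambda>n. G (\<xi>0 + r n * v)) \<longlonglongrightarrow> G \<xi>0"
        using isCont_tendsto_compose[OF cont] by simp
    qed
    show "AE v in lborel. norm (G (\<xi>0 + r n * v) * complex_of_real (exp (-pi* v^2))) \<le> M * exp (-pi* v^2)" for n
      by (rule AE_I2) (simp add: norm_mult mult_right_mono bnd)
  qed simp_all
  also have "(LINT v|lborel. G \<xi>0 * complex_of_real (exp (-pi* v^2))) = G \<xi>0"
    using gauss_one by simp
  finally show ?thesis by (simp only: eq)
qed

lemma exp_le1: "exp (-pi*e*x^2) \<le> 1" if "e \<ge> 0" for e x :: real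
  using that by simp

lemma inversion:
  fixes F :: "real \<Rightarrow> complex"
  assumes F: "integrable lborel F" and Fc: "isCont F \<xi>" and Fb: "\<And>x. norm (F x) \<le> M"
    and iF: "integrable lborel (inv_fourier F)"
  shows "(LINT x|lborel. inv_fourier F x * cis (-2*pi*x*\<xi>)) = F \<xi>"
proof (rule LIMSEQ_unique)
  have Fm[measurable]: "F \<in> borel_measurable borel" using F by (simp add: borel_measurable_integrable)
  let ?S = "\<lambda>n. LINT x|lborel. inv_fourier F x * complex_of_real (exp (-pi*ee n*x^2)) * cis (-2*pi*x*\<xi>)"
  show "?S \<longlonglongrightarrow> F \<xi>"
    unfolding smooth_id[OF F ee_pos] by (rule approx_id[OF Fm Fb Fc])
  show "?S \<longlonglongrightarrow> (LINT x|lborel. inv_fourier F x * cis (-2*pi*x*\<xi>))"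
  proof (rule integral_dominated_convergence[where w="\<lambda>x. norm (inv_fourier F x)"])
    show "integrable lborel (\<lambda>x. norm (inv_fourier F x))" using iF by simp
    show "AE x in lborel. (\<lambda>n. inv_fourier F x * complex_of_real (exp (-pi*ee n*x^2)) * cis (-2*pi*x*\<xi>))
        \<longlonglongrightarrow> inv_fourier F x * cis (-2*pi*x*\<xi>)"
    proof (rule AE_I2)
      fix x
      have "(\<lambda>n. complex_of_real (exp (-pi*ee n*x^2))) \<longlonglongrightarrow> complex_of_real (exp (-pi*0*x^2))"
        by (intro tendsto_intros ee_lim)
      then show "(\<lambda>n. inv_fourier F x * complex_of_real (exp (-pi*ee n*x^2)) * cis (-2*pi*x*\<xi>))
        \<longlonglongrightarrow> inv_fourier F x * cis (-2*pi*x*\<xi>)"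
        using tendsto_mult[OF tendsto_mult[OF tendsto_const[of "inv_fourier F x"]] tendsto_const[of "cis (-2*pi*x*\<xi>)"]]
        by fastforce
    qed
    show "AE x in lborel. norm (inv_fourier F x * complex_of_real (exp (-pi*ee n*x^2)) * cis (-2*pi*x*\<xi>)) \<le> norm (inv_fourier F x)" for n
      using ee_pos[of n] by (intro AE_I2) (simp add: norm_mult mult_left_le)
  qed simp_all
qed

lemma smooth_id2:
  fixes F G :: "real \<Rightarrow> complex"
  assumes F: "integrable lborel F" and G: "integrable lborel G" and e: "\<epsilon> > 0"
  shows "(LINT x|lborel. inv_fourier F x * complex_of_real (exp (-pi*\<epsilon>*x^2)) * cnj (inv_fourier G x))
       = (LINT \<eta>|lborel. cnj (G \<eta>) * (LINT \<xi>|lborel. F \<xi> * complex_of_real (gk \<epsilon> (\<xi> - \<eta>))))"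
proof -
  have [measurable]: "F \<in> borel_measurable borel" "G \<in> borel_measurable borel"
    using F G by (auto simp: borel_measurable_integrable)
  let ?P = "\<lambda>x. inv_fourier F x * complex_of_real (exp (-pi*\<epsilon>*x^2))"
  have iP: "integrable lborel ?P"
  proof (rule Bochner_Integration.integrable_bound[OF integrable_mult_right[OF gauss_int[OF e], of "of_real (LINT \<xi>|lborel. norm (F \<xi>))"]])
    show "?P \<in> borel_measurable lborel" by measurable
    show "AE x in lborel. norm (?P x) \<le> norm (complex_of_real (LINT \<xi>|lborel. norm (F \<xi>)) * complex_of_real (exp (-pi*\<epsilon>*x^2)))"
      using inv_fourier_bound[OF F] by (intro AE_I2) (simp add: norm_mult mult_right_mono)
  qed
  have iG: "integrable lborel (\<lambda>\<eta>. cnj (G \<eta>))" using G by simp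
  let ?k = "\<lambda>p. cis (-2*pi*fst p * snd p)"
  have km: "?k \<in> borel_measurable borel" by (intro borel_measurable_continuous_onI continuous_intros)
  have cg: "cnj (inv_fourier G x) = (LINT \<eta>|lborel. cnj (G \<eta>) * ?k (x,\<eta>))" for x
  proof -
    have "cnj (inv_fourier G x) = (LINT \<eta>|lborel. cnj (G \<eta> * cis (2*pi*x*\<eta>)))"
      unfolding inv_fourier_def by (rule Bochner_Integration.integral_cnj[symmetric])
    also have "\<dots> = (LINT \<eta>|lborel. cnj (G \<eta>) * ?k (x,\<eta>))"
      by (intro Bochner_Integration.integral_cong refl) (simp add: cis_cnj)
    finally show ?thesis .
  qed
  have "(LINT x|lborel. ?P x * cnj (inv_fourier G x)) = (LINT x|lborel. ?P x * (LINT \<eta>|lborel. cnj (G \<eta>) * ?k (x,\<eta>)))"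
    by (simp only: cg)
  also have "\<dots> = (LINT \<eta>|lborel. cnj (G \<eta>) * (LINT x|lborel. ?P x * ?k (x,\<eta>)))"
    by (rule swap_int(2)[OF iG iP km]) simp
  also have "\<dots> = (LINT \<eta>|lborel. cnj (G \<eta>) * (LINT \<xi>|lborel. F \<xi> * complex_of_real (gk \<epsilon> (\<xi> - \<eta>))))"
    using smooth_id[OF F e] by simp
  finally show ?thesis .
qed

lemma gk_meas[measurable]: "gk e \<in> borel_measurable borel"
  unfolding gk_def[abs_def] by measurable

lemma gk_nonneg: "\<epsilon> > 0 \<Longrightarrow> gk \<epsilon> u \<ge> 0" by (simp add: gk_def)

lemma gk_int:
  assumes e: "\<epsilon> > 0"
  shows "integrable lborel (\<lambda>\<xi>. gk \<epsilon> (\<xi> - \<eta>))" and "(LINT \<xi>|lborel. gk \<epsilon> (\<xi> - \<eta>)) = 1"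
proof -
  have e': "1/\<epsilon> > 0" using e by simp
  have i0: "integrable lborel (\<lambda>x. exp (-pi*(1/\<epsilon>)*x^2))"
    using gauss_int[OF e'] by (simp add: complex_of_real_integrable_eq)
  have v0: "(LINT x|lborel. exp (-pi*(1/\<epsilon>)*x^2)) = sqrt \<epsilon>"
  proof -
    have "complex_of_real (LINT x|lborel. exp (-pi*(1/\<epsilon>)*x^2)) = complex_of_real (exp (-pi*0^2/(1/\<epsilon>)) / sqrt (1/\<epsilon>))"
      using gauss_ft(2)[OF e', of 0] by simp
    then show ?thesis using e by (simp add: real_sqrt_divide)
  qed
  have eqf: "(\<lambda>x. gk \<epsilon> x) = (\<lambda>x. exp (-pi*(1/\<epsilon>)*x^2) / sqrt \<epsilon>)"
    by (auto simp: gk_def)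
  have i1: "integrable lborel (\<lambda>x. gk \<epsilon> x)" unfolding eqf using i0 by simp
  have v1: "(LINT x|lborel. gk \<epsilon> x) = 1" unfolding eqf using v0 e by simp
  show "integrable lborel (\<lambda>\<xi>. gk \<epsilon> (\<xi> - \<eta>))"
    using lborel_integrable_real_affine[OF i1, of 1 "-\<eta>"] by simp
  show "(LINT \<xi>|lborel. gk \<epsilon> (\<xi> - \<eta>)) = 1"
    using lborel_integral_real_affine[of 1 "\<lambda>x. gk \<epsilon> x" "-\<eta>"] v1 by simp
qed

lemma pars_lim:
  fixes F G :: "real \<Rightarrow> complex"
  assumes F: "integrable lborel F" and G: "integrable lborel G"
    and Fc: "\<And>x. isCont F x" and Fb: "\<And>x. norm (F x) \<le> M"
  shows "(\<lambda>n. LINT x|lborel. inv_fourier F x * complex_of_real (exp (-pi*ee n*x^2)) * cnj (inv_fourier G x))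
     \<longlonglongrightarrow> (LINT \<eta>|lborel. F \<eta> * cnj (G \<eta>))"
proof -
  have Fm[measurable]: "F \<in> borel_measurable borel" "G \<in> borel_measurable borel"
    using F G by (auto simp: borel_measurable_integrable)
  have "(\<lambda>n. LINT \<eta>|lborel. cnj (G \<eta>) * (LINT \<xi>|lborel. F \<xi> * complex_of_real (gk (ee n) (\<xi> - \<eta>))))
     \<longlonglongrightarrow> (LINT \<eta>|lborel. cnj (G \<eta>) * F \<eta>)"
  proof (rule integral_dominated_convergence[where w="\<lambda>\<eta>. M * norm (G \<eta>)"])
    show "integrable lborel (\<lambda>\<eta>. M * norm (G \<eta>))" using G by simp
    show "AE \<eta> in lborel. (\<lambda>n. cnj (G \<eta>) * (LINT \<xi>|lborel. F \<xi> * complex_of_real (gk (ee n) (\<xi> - \<eta>)))) \<longlonglongrightarrow> cnj (G \<eta>) * F \<eta>"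
      by (intro AE_I2 tendsto_mult_left approx_id[OF Fm(1) Fb Fc])
    show "AE \<eta> in lborel. norm (cnj (G \<eta>) * (LINT \<xi>|lborel. F \<xi> * complex_of_real (gk (ee n) (\<xi> - \<eta>)))) \<le> M * norm (G \<eta>)" for n
    proof (rule AE_I2)
      fix \<eta>
      have "norm (LINT \<xi>|lborel. F \<xi> * complex_of_real (gk (ee n) (\<xi> - \<eta>))) \<le> (LINT \<xi>|lborel. norm (F \<xi> * complex_of_real (gk (ee n) (\<xi> - \<eta>))))"
        by (rule integral_norm_bound)
      also have "\<dots> \<le> (LINT \<xi>|lborel. M * gk (ee n) (\<xi> - \<eta>))"
      proof (rule integral_mono')
        show "integrable lborel (\<lambda>\<xi>. M * gk (ee n) (\<xi> - \<eta>))"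
          using gk_int(1)[OF ee_pos] by simp
        have "M \<ge> 0" using Fb[of 0] norm_ge_zero order_trans by blast
        then show "\<And>\<xi>. \<xi> \<in> space lborel \<Longrightarrow> 0 \<le> M * gk (ee n) (\<xi> - \<eta>)" using gk_nonneg[OF ee_pos] by simp
        show "\<And>\<xi>. \<xi> \<in> space lborel \<Longrightarrow> norm (F \<xi> * complex_of_real (gk (ee n) (\<xi> - \<eta>))) \<le> M * gk (ee n) (\<xi> - \<eta>)"
          using gk_nonneg[OF ee_pos] by (simp add: norm_mult mult_right_mono Fb)
      qed
      also have "\<dots> = M" using gk_int(2)[OF ee_pos] by simp
      finally show "norm (cnj (G \<eta>) * (LINT \<xi>|lborel. F \<xi> * complex_of_real (gk (ee n) (\<xi> - \<eta>)))) \<le> M * norm (G \<eta>)"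
        by (simp add: norm_mult mult.commute[of M] mult_left_mono)
    qed
  qed (measurable, measurable, measurable)
  then show ?thesis
    unfolding smooth_id2[OF F G ee_pos] by (simp add: mult.commute)
qed

lemma ift_sq_int:
  fixes F :: "real \<Rightarrow> complex"
  assumes F: "integrable lborel F" and e: "e > 0"
  shows "integrable lborel (\<lambda>x. (norm (inv_fourier F x))^2 * exp (-pi*e*x^2))"
proof -
  have [measurable]: "F \<in> borel_measurable borel" using F by (simp add: borel_measurable_integrable)
  define C where "C = (LINT \<xi>|lborel. norm (F \<xi>))"
  have "integrable lborel (\<lambda>x. C^2 * exp (-pi*e*x^2))"
    using gauss_int[OF e] by (simp add: complex_of_real_integrable_eq)
  then show ?thesis
  proof (rule Bochner_Integration.integrable_bound)
    show "(\<lambda>x. (norm (inv_fourier F x))^2 * exp (-pi*e*x^2)) \<in> borel_measurable lborel" by measurable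
    show "AE x in lborel. norm ((norm (inv_fourier F x))^2 * exp (-pi*e*x^2)) \<le> norm (C^2 * exp (-pi*e*x^2))"
      using inv_fourier_bound[OF F] by (intro AE_I2) (simp add: C_def power_mono)
  qed
qed

lemma plancherel:
  fixes F :: "real \<Rightarrow> complex"
  assumes F: "integrable lborel F" and Fc: "\<And>x. isCont F x" and Fb: "\<And>x. norm (F x) \<le> M"
  shows "integrable lborel (\<lambda>x. (norm (inv_fourier F x))^2)"
    and "(LINT x|lborel. (norm (inv_fourier F x))^2) = (LINT \<xi>|lborel. (norm (F \<xi>))^2)"
proof -
  have [measurable]: "F \<in> borel_measurable borel" using F by (simp add: borel_measurable_integrable)
  let ?q = "\<lambda>x. (norm (inv_fourier F x))^2"
  let ?A = "\<lambda>n. LINT x|lborel. ?q x * exp (-pi*ee n*x^2)"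
  define B where "B = (LINT \<xi>|lborel. (norm (F \<xi>))^2)"
  have eqA: "(LINT x|lborel. inv_fourier F x * complex_of_real (exp (-pi*ee n*x^2)) * cnj (inv_fourier F x))
      = complex_of_real (?A n)" for n
  proof -
    have "(LINT x|lborel. inv_fourier F x * complex_of_real (exp (-pi*ee n*x^2)) * cnj (inv_fourier F x))
        = (LINT x|lborel. complex_of_real (?q x * exp (-pi*ee n*x^2)))"
    proof (intro Bochner_Integration.integral_cong refl)
      fix x
      have "inv_fourier F x * complex_of_real (exp (-pi*ee n*x^2)) * cnj (inv_fourier F x)
          = (inv_fourier F x * cnj (inv_fourier F x)) * complex_of_real (exp (-pi*ee n*x^2))" by (simp only: mult_ac)
      also have "\<dots> = complex_of_real (?q x * exp (-pi*ee n*x^2))" by (simp only: complex_norm_square[symmetric] of_real_mult)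
      finally show "inv_fourier F x * complex_of_real (exp (-pi*ee n*x^2)) * cnj (inv_fourier F x) = complex_of_real (?q x * exp (-pi*ee n*x^2))" .
    qed
    then show ?thesis by (simp only: integral_complex_of_real)
  qed
  have eqB: "(LINT \<eta>|lborel. F \<eta> * cnj (F \<eta>)) = complex_of_real B"
  proof -
    have "(LINT \<eta>|lborel. F \<eta> * cnj (F \<eta>)) = (LINT \<eta>|lborel. complex_of_real ((norm (F \<eta>))^2))"
      by (intro Bochner_Integration.integral_cong refl) (simp only: complex_norm_square)
    then show ?thesis by (simp only: integral_complex_of_real B_def)
  qed
  have "(\<lambda>n. complex_of_real (?A n)) \<longlonglongrightarrow> complex_of_real B"
    using pars_lim[OF F F Fc Fb] unfolding eqA eqB .
  then have "(\<lambda>n. Re (complex_of_real (?A n))) \<longlonglongrightarrow> Re (complex_of_real B)"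
    by (rule tendsto_Re)
  then have lA: "?A \<longlonglongrightarrow> B" by simp
  have nnA: "(\<integral>\<^sup>+x. ennreal (?q x * exp (-pi*ee n*x^2)) \<partial>lborel) = ennreal (?A n)" for n
    by (rule nn_integral_eq_integral[OF ift_sq_int[OF F ee_pos]]) simp
  have "(\<lambda>n. \<integral>\<^sup>+x. ennreal (?q x * exp (-pi*ee n*x^2)) \<partial>lborel) \<longlonglongrightarrow> (\<integral>\<^sup>+x. ennreal (?q x) \<partial>lborel)"
  proof (rule nn_integral_LIMSEQ)
    show "incseq (\<lambda>n x. ennreal (?q x * exp (-pi*ee n*x^2)))"
    proof (rule incseq_SucI, rule le_funI)
      fix n x
      have "ee (Suc n) \<le> ee n" using ee_dec by (simp add: decseq_Suc_iff)
      then have "exp (-pi*ee n*x^2) \<le> exp (-pi*ee (Suc n)*x^2)"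
        by (simp add: mult_right_mono)
      then show "ennreal (?q x * exp (-pi*ee n*x^2)) \<le> ennreal (?q x * exp (-pi*ee (Suc n)*x^2))"
        by (intro ennreal_leI mult_left_mono) auto
    qed
    show "\<And>n. (\<lambda>x. ennreal (?q x * exp (-pi*ee n*x^2))) \<in> borel_measurable lborel" by measurable
    show "\<And>x. (\<lambda>n. ennreal (?q x * exp (-pi*ee n*x^2))) \<longlonglongrightarrow> ennreal (?q x)"
    proof -
      fix x
      have "(\<lambda>n. ?q x * exp (-pi*ee n*x^2)) \<longlonglongrightarrow> ?q x * exp (-pi*0*x^2)"
        by (intro tendsto_intros ee_lim)
      then show "(\<lambda>n. ennreal (?q x * exp (-pi*ee n*x^2))) \<longlonglongrightarrow> ennreal (?q x)"
        by (intro tendsto_ennrealI) simp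
    qed
  qed
  moreover have "(\<lambda>n. \<integral>\<^sup>+x. ennreal (?q x * exp (-pi*ee n*x^2)) \<partial>lborel) \<longlonglongrightarrow> ennreal B"
    unfolding nnA by (intro tendsto_ennrealI lA)
  ultimately have nnq: "(\<integral>\<^sup>+x. ennreal (?q x) \<partial>lborel) = ennreal B"
    by (rule LIMSEQ_unique)
  show iq: "integrable lborel ?q"
    by (rule integrableI_nn_integral_finite[OF _ _ nnq]) auto
  have "B \<ge> 0" unfolding B_def by (intro integral_nonneg_AE) auto
  then show "(LINT x|lborel. ?q x) = (LINT \<xi>|lborel. (norm (F \<xi>))^2)"
    using nnq nn_integral_eq_integral[OF iq] by (simp add: B_def)
qed

lemma parseval:
  fixes F G :: "real \<Rightarrow> complex"
  assumes F: "integrable lborel F" and Fc: "\<And>x. isCont F x" and Fb: "\<And>x. norm (F x) \<le> M"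
    and G: "integrable lborel G" and Gc: "\<And>x. isCont G x" and Gb: "\<And>x. norm (G x) \<le> M'"
  shows "integrable lborel (\<lambda>x. inv_fourier F x * cnj (inv_fourier G x))"
    and "(LINT x|lborel. inv_fourier F x * cnj (inv_fourier G x)) = (LINT \<xi>|lborel. F \<xi> * cnj (G \<xi>))"
proof -
  have [measurable]: "F \<in> borel_measurable borel" "G \<in> borel_measurable borel"
    using F G by (auto simp: borel_measurable_integrable)
  let ?w = "\<lambda>x. (norm (inv_fourier F x))^2 + (norm (inv_fourier G x))^2"
  have iw: "integrable lborel ?w"
    using plancherel(1)[OF F Fc Fb] plancherel(1)[OF G Gc Gb] by simp
  have bnd: "norm (inv_fourier F x * cnj (inv_fourier G x) * c) \<le> ?w x" if "norm c \<le> 1" for x c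
  proof -
    have "norm (inv_fourier F x * cnj (inv_fourier G x) * c) \<le> norm (inv_fourier F x) * norm (inv_fourier G x)"
      using that by (simp add: norm_mult mult_left_le)
    also have "\<dots> \<le> ?w x"
      using sum_squares_bound[of "norm (inv_fourier F x)" "norm (inv_fourier G x)"]
        mult_nonneg_nonneg[OF norm_ge_zero norm_ge_zero, of "inv_fourier F x" "inv_fourier G x"] by linarith
    finally show ?thesis .
  qed
  show "integrable lborel (\<lambda>x. inv_fourier F x * cnj (inv_fourier G x))"
    by (rule Bochner_Integration.integrable_bound[OF iw]) (auto intro!: AE_I2 order_trans[OF _ bnd[of 1]])
  show "(LINT x|lborel. inv_fourier F x * cnj (inv_fourier G x)) = (LINT \<xi>|lborel. F \<xi> * cnj (G \<xi>))"
  proof (rule LIMSEQ_unique[OF _ pars_lim[OF F G Fc Fb]])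
    show "(\<lambda>n. LINT x|lborel. inv_fourier F x * complex_of_real (exp (-pi*ee n*x^2)) * cnj (inv_fourier G x))
      \<longlonglongrightarrow> (LINT x|lborel. inv_fourier F x * cnj (inv_fourier G x))"
    proof (rule integral_dominated_convergence[where w="?w"])
      show "AE x in lborel. (\<lambda>n. inv_fourier F x * complex_of_real (exp (-pi*ee n*x^2)) * cnj (inv_fourier G x))
        \<longlonglongrightarrow> inv_fourier F x * cnj (inv_fourier G x)"
      proof (rule AE_I2)
        fix x
        have "(\<lambda>n. complex_of_real (exp (-pi*ee n*x^2))) \<longlonglongrightarrow> complex_of_real (exp (-pi*0*x^2))"
          by (intro tendsto_intros ee_lim)
        then show "(\<lambda>n. inv_fourier F x * complex_of_real (exp (-pi*ee n*x^2)) * cnj (inv_fourier G x))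
          \<longlonglongrightarrow> inv_fourier F x * cnj (inv_fourier G x)"
          using tendsto_mult[OF tendsto_mult[OF tendsto_const[of "inv_fourier F x"]] tendsto_const[of "cnj (inv_fourier G x)"]]
          by fastforce
      qed
      show "AE x in lborel. norm (inv_fourier F x * complex_of_real (exp (-pi*ee n*x^2)) * cnj (inv_fourier G x)) \<le> ?w x" for n
        using bnd[of "complex_of_real (exp (-pi*ee n*x^2))" for x] ee_pos[of n]
        by (intro AE_I2) (simp add: mult_ac)
      show "integrable lborel ?w" by (fact iw)
    qed measurable
  qed
qed

lemma odd_int_zero:
  fixes g :: "real \<Rightarrow> real"
  assumes "\<And>x. g (-x) = - g x"
  shows "(LINT x|lborel. g x) = 0"
proof -
  have "(LINT x|lborel. g x) = \<bar>-1\<bar> *\<^sub>R (LINT x|lborel. g (0 + (-1) * x))"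
    by (rule lborel_integral_real_affine) simp
  also have "\<dots> = - (LINT x|lborel. g x)" using assms by simp
  finally show ?thesis by simp
qed

lemma even_int:
  fixes g :: "real \<Rightarrow> real"
  assumes gm[measurable]: "g \<in> borel_measurable borel" and ev: "\<And>x. g (-x) = g x"
    and si: "set_integrable lborel {0<..} g"
  shows "integrable lborel g" and "(LINT x|lborel. g x) = 2 * (LINT x:{0<..}|lborel. g x)"
proof -
  let ?h = "\<lambda>x. indicator {0<..} x * g x"
  have ih: "integrable lborel ?h" using si by (simp add: set_integrable_def)
  have ih2: "integrable lborel (\<lambda>x. ?h (0 + (-1) * x))"
    by (rule lborel_integrable_real_affine[OF ih]) simp
  have ae: "AE x in lborel. g x = ?h x + ?h (0 + (-1) * x)"
    using AE_lborel_singleton[of 0] by eventually_elim (auto simp: ev indicator_def)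
  have isum: "integrable lborel (\<lambda>x. ?h x + ?h (0 + (-1) * x))" using ih ih2 by simp
  show "integrable lborel g"
    by (rule integrable_cong_AE_imp[OF isum]) (use ae in \<open>auto elim: eventually_mono\<close>)
  have "(LINT x|lborel. g x) = (LINT x|lborel. ?h x + ?h (0 + (-1) * x))"
    by (rule integral_cong_AE) (use ae in auto)
  also have "\<dots> = (LINT x|lborel. ?h x) + (LINT x|lborel. ?h (0 + (-1) * x))"
    using ih ih2 by simp
  also have "(LINT x|lborel. ?h (0 + (-1) * x)) = (LINT x|lborel. ?h x)"
    using lborel_integral_real_affine[of "-1" ?h 0] by simp
  finally show "(LINT x|lborel. g x) = 2 * (LINT x:{0<..}|lborel. g x)"
    by (simp add: set_lebesgue_integral_def)
qed

lemma exp_cos_I0i: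
  fixes c d :: real assumes c: "c > 0"
  shows "set_integrable lborel {0<..} (\<lambda>x. exp (-(x * c)) * cos (d * x))"
    and "(LINT x:{0<..}|lborel. exp (-(x * c)) * cos (d * x)) = c / (c^2 + d^2)"
proof -
  have cd: "c^2 + d^2 > 0" using c by (simp add: add_pos_nonneg)
  show si: "set_integrable lborel {0<..} (\<lambda>x. exp (-(x * c)) * cos (d * x))"
  proof (rule set_integrable_bound[OF integrable_I0i_exp_mscale[OF c]])
    show "set_borel_measurable lborel {0<..} (\<lambda>x. exp (-(x * c)) * cos (d * x))"
      unfolding set_borel_measurable_def by measurable
  qed (auto simp: abs_mult mult_left_le)
  let ?F = "\<lambda>x. exp (-(x * c)) * (d * sin (d * x) - c * cos (d * x)) / (c^2 + d^2)"
  have "(LBINT x=0..\<infinity>. exp (-(x * c)) * cos (d * x)) = 0 - (- c / (c^2 + d^2))"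
  proof (rule interval_integral_FTC_integrable)
    show "(0::ereal) < \<infinity>" by simp
    show "(?F has_vector_derivative exp (-(x * c)) * cos (d * x)) (at x)" for x
      using cd
      by (auto intro!: derivative_eq_intros
             simp: has_real_derivative_iff_has_vector_derivative[symmetric] power2_eq_square)
         (simp_all add: field_simps)
    show "isCont (\<lambda>x. exp (-(x * c)) * cos (d * x)) x" for x by simp
    show "set_integrable lborel (einterval 0 \<infinity>) (\<lambda>x. exp (-(x * c)) * cos (d * x))"
      using si by (simp add: zero_ereal_def)
    show "((?F \<circ> real_of_ereal) \<longlongrightarrow> - c / (c^2 + d^2)) (at_right 0)"
      using c by (auto simp: zero_ereal_def ereal_tendsto_simps intro!: tendsto_eq_intros)
    have *: "((\<lambda>t. exp (- (t * c))) \<longlongrightarrow> 0) at_top"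
      using c
      by (auto intro!: exp_at_bot[THEN filterlim_compose] filterlim_tendsto_pos_mult_at_top filterlim_ident
             simp: filterlim_uminus_at_bot mult.commute[of _ c])
    have "((\<lambda>t. exp (- (t * c)) * ((d * sin (d * t) - c * cos (d * t)) / (c^2 + d^2))) \<longlongrightarrow> 0) at_top"
    proof (rule tendsto_0_le[OF *, where K="(\<bar>d\<bar> + \<bar>c\<bar>) / (c^2 + d^2)"], rule always_eventually, rule allI)
      fix t
      have "\<bar>d * sin (d * t) - c * cos (d * t)\<bar> \<le> \<bar>d * sin (d * t)\<bar> + \<bar>c * cos (d * t)\<bar>"
        by (rule abs_triangle_ineq4)
      also have "\<dots> \<le> \<bar>d\<bar> + \<bar>c\<bar>"
        by (intro add_mono) (simp_all add: abs_mult mult_left_le)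
      finally have "\<bar>d * sin (d * t) - c * cos (d * t)\<bar> \<le> \<bar>d\<bar> + \<bar>c\<bar>" .
      then have "\<bar>(d * sin (d * t) - c * cos (d * t)) / (c^2 + d^2)\<bar> \<le> (\<bar>d\<bar> + \<bar>c\<bar>) / (c^2 + d^2)"
        using cd by (simp add: divide_right_mono)
      then show "norm (exp (- (t * c)) * ((d * sin (d * t) - c * cos (d * t)) / (c^2 + d^2)))
          \<le> norm (exp (- (t * c))) * ((\<bar>d\<bar> + \<bar>c\<bar>) / (c^2 + d^2))"
        by (simp add: abs_mult mult_left_mono times_divide_eq_right[symmetric] del: times_divide_eq_right)
    qed
    then show "((?F \<circ> real_of_ereal) \<longlongrightarrow> 0) (at_left \<infinity>)"
      unfolding ereal_tendsto_simps by (simp add: times_divide_eq_right)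
  qed
  then show "(LINT x:{0<..}|lborel. exp (-(x * c)) * cos (d * x)) = c / (c^2 + d^2)"
    by (simp add: interval_lebesgue_integral_0_infty)
qed

definition Ek :: "real \<Rightarrow> real \<Rightarrow> real" where "Ek y \<eta> = exp (-2*pi*y*\<bar>\<eta>\<bar>)"
definition Pk :: "real \<Rightarrow> real \<Rightarrow> real" where "Pk y s = y / (pi*(y^2 + s^2))"

lemma Ek_meas[measurable]: "Ek y \<in> borel_measurable borel"
  unfolding Ek_def[abs_def] by measurable

lemma Ek_pos: "0 \<le> Ek y \<eta>" by (simp add: Ek_def)
lemma Ek_le1: "y \<ge> 0 \<Longrightarrow> Ek y \<eta> \<le> 1" by (simp add: Ek_def)
lemma Ek_cont: "isCont (Ek y) x" unfolding Ek_def[abs_def] by (intro continuous_intros)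
lemma Ek_pos_eq: "\<eta> > 0 \<Longrightarrow> Ek y \<eta> = exp (-(\<eta> * (2*pi*y)))" by (simp add: Ek_def mult_ac)

lemma Ek_int: assumes y: "y > 0" shows "integrable lborel (Ek y)"
proof (rule even_int(1))
  show "Ek y (-x) = Ek y x" for x by (simp add: Ek_def)
  have "set_integrable lborel {0<..} (\<lambda>x. exp (-(x * (2*pi*y))))"
    using y by (intro integrable_I0i_exp_mscale) simp
  then show "set_integrable lborel {0<..} (Ek y)"
    by (rule set_integrable_cong[THEN iffD1, rotated -1]) (auto simp: Ek_pos_eq)
qed simp

lemma Ek_cos_int: assumes y: "y > 0" shows "integrable lborel (\<lambda>\<eta>. Ek y \<eta> * cos (2*pi* s*\<eta>))"
  and "(LINT \<eta>|lborel. Ek y \<eta> * cos (2*pi* s*\<eta>)) = Pk y s"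
proof -
  let ?c = "2*pi*y" and ?d = "2*pi* s"
  have c: "?c > 0" using y by simp
  have si: "set_integrable lborel {0<..} (\<lambda>\<eta>. Ek y \<eta> * cos (2*pi* s*\<eta>))"
    using exp_cos_I0i(1)[OF c, of ?d]
    by (rule set_integrable_cong[THEN iffD1, rotated -1]) (auto simp: Ek_pos_eq mult_ac)
  have ev: "Ek y (-x) * cos (2*pi* s*(-x)) = Ek y x * cos (2*pi* s*x)" for x by (simp add: Ek_def)
  show "integrable lborel (\<lambda>\<eta>. Ek y \<eta> * cos (2*pi* s*\<eta>))"
    by (rule even_int(1)[OF _ ev si]) measurable
  have "(LINT \<eta>|lborel. Ek y \<eta> * cos (2*pi* s*\<eta>)) = 2 * (LINT \<eta>:{0<..}|lborel. Ek y \<eta> * cos (2*pi* s*\<eta>))"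
    by (rule even_int(2)[OF _ ev si]) measurable
  also have "(LINT \<eta>:{0<..}|lborel. Ek y \<eta> * cos (2*pi* s*\<eta>)) = (LINT \<eta>:{0<..}|lborel. exp (-(\<eta> * ?c)) * cos (?d * \<eta>))"
    by (rule set_lebesgue_integral_cong) (auto simp: Ek_pos_eq mult_ac)
  also have "\<dots> = ?c / (?c^2 + ?d^2)" by (rule exp_cos_I0i(2)[OF c])
  also have "2 * (?c / (?c^2 + ?d^2)) = Pk y s"
  proof -
    have "?c^2 + ?d^2 = (4*pi) * (pi*(y^2+s^2))" by (simp add: power_mult_distrib algebra_simps power2_eq_square)
    then show ?thesis using y by (simp add: Pk_def)
  qed
  finally show "(LINT \<eta>|lborel. Ek y \<eta> * cos (2*pi* s*\<eta>)) = Pk y s" .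
qed

lemma Ek_sin_int: assumes y: "y > 0" shows "integrable lborel (\<lambda>\<eta>. Ek y \<eta> * sin (2*pi* s*\<eta>))"
  and "(LINT \<eta>|lborel. Ek y \<eta> * sin (2*pi* s*\<eta>)) = 0"
proof -
  show "integrable lborel (\<lambda>\<eta>. Ek y \<eta> * sin (2*pi* s*\<eta>))"
    by (rule Bochner_Integration.integrable_bound[OF Ek_int[OF y]]) (auto simp: abs_mult Ek_pos mult_left_le)
  show "(LINT \<eta>|lborel. Ek y \<eta> * sin (2*pi* s*\<eta>)) = 0"
    by (rule odd_int_zero) (simp add: Ek_def)
qed

lemma ift_Ek: assumes y: "y > 0"
  shows "inv_fourier (\<lambda>\<eta>. complex_of_real (Ek y \<eta>)) s = complex_of_real (Pk y s)"
proof -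
  have eq: "complex_of_real (Ek y \<eta>) * cis (2*pi* s*\<eta>) =
      complex_of_real (Ek y \<eta> * cos (2*pi* s*\<eta>)) + \<i> * complex_of_real (Ek y \<eta> * sin (2*pi* s*\<eta>))" for \<eta>
    by (simp add: cis.ctr Complex_eq algebra_simps)
  have "inv_fourier (\<lambda>\<eta>. complex_of_real (Ek y \<eta>)) s
      = (LINT \<eta>|lborel. complex_of_real (Ek y \<eta> * cos (2*pi* s*\<eta>)) + \<i> * complex_of_real (Ek y \<eta> * sin (2*pi* s*\<eta>)))"
    unfolding inv_fourier_def by (simp only: eq)
  also have "\<dots> = complex_of_real (LINT \<eta>|lborel. Ek y \<eta> * cos (2*pi* s*\<eta>)) + \<i> * complex_of_real (LINT \<eta>|lborel. Ek y \<eta> * sin (2*pi* s*\<eta>))"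
  proof -
    have i1: "integrable lborel (\<lambda>\<eta>. complex_of_real (Ek y \<eta> * cos (2*pi * s*\<eta>)))"
      using Ek_cos_int(1)[OF y, of s] by (rule integrable_of_real)
    have i2: "integrable lborel (\<lambda>\<eta>. \<i> * complex_of_real (Ek y \<eta> * sin (2*pi * s*\<eta>)))"
      using Ek_sin_int(1)[OF y, of s] by (intro integrable_mult_right integrable_of_real)
    show ?thesis by (simp only: Bochner_Integration.integral_add[OF i1 i2] integral_complex_of_real integral_mult_right_zero)
  qed
  also have "\<dots> = complex_of_real (Pk y s)"
    using Ek_cos_int(2)[OF y, of s] Ek_sin_int(2)[OF y, of s] by simp
  finally show ?thesis .
qed

lemma Pk_int: assumes y: "y > 0" shows "integrable lborel (Pk y)"
proof -
  have h: "integrable lborel (\<lambda>x::real. inverse (1 + x^2))"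
    using integrable_inverse_1_plus_square by (simp add: set_integrable_def)
  have "integrable lborel (\<lambda>s. inverse (1 + (0 + (1/y) * s)^2))"
    using y by (intro lborel_integrable_real_affine[OF h]) simp
  then have "integrable lborel (\<lambda>s. (1/(pi*y)) * inverse (1 + (0 + (1/y) * s)^2))"
    by simp
  moreover have "(\<lambda>s. (1/(pi*y)) * inverse (1 + (0 + (1/y) * s)^2)) = Pk y"
    using y by (auto simp: Pk_def field_simps power2_eq_square intro!: ext)
  ultimately show ?thesis by simp
qed

lemma Pk_ft: assumes y: "y > 0"
  shows "(LINT s|lborel. complex_of_real (Pk y s) * cis (-2*pi* s*\<xi>)) = complex_of_real (Ek y \<xi>)"
proof -
  have ift: "inv_fourier (\<lambda>\<eta>. complex_of_real (Ek y \<eta>)) = (\<lambda>s. complex_of_real (Pk y s))"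
    using ift_Ek[OF y] by auto
  have "(LINT s|lborel. inv_fourier (\<lambda>\<eta>. complex_of_real (Ek y \<eta>)) s * cis (-2*pi* s*\<xi>)) = complex_of_real (Ek y \<xi>)"
  proof (rule inversion)
    show "integrable lborel (\<lambda>\<eta>. complex_of_real (Ek y \<eta>))" using Ek_int[OF y] by (simp add: complex_of_real_integrable_eq)
    show "isCont (\<lambda>\<eta>. complex_of_real (Ek y \<eta>)) \<xi>" by (intro continuous_intros Ek_cont[unfolded isCont_def] isCont_o2[OF Ek_cont]) 
    show "norm (complex_of_real (Ek y x)) \<le> 1" for x using y Ek_le1[of y x] Ek_pos[of y x] by simp
    show "integrable lborel (inv_fourier (\<lambda>\<eta>. complex_of_real (Ek y \<eta>)))"
      unfolding ift using Pk_int[OF y] by (simp add: complex_of_real_integrable_eq)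
  qed
  then show ?thesis unfolding ift .
qed

lemma Pk_shift_int: "y > 0 \<Longrightarrow> integrable lborel (\<lambda>t. complex_of_real (Pk y (x - t)))"
proof -
  assume y: "y > 0"
  have "integrable lborel (\<lambda>t. Pk y (x + (-1) * t))"
    by (rule lborel_integrable_real_affine[OF Pk_int[OF y]]) simp
  then show ?thesis by (simp add: complex_of_real_integrable_eq)
qed

lemma Pk_shift_ft: assumes y: "y > 0"
  shows "(LINT t|lborel. complex_of_real (Pk y (x - t)) * cis (2*pi*t*\<xi>)) = cis (2*pi*x*\<xi>) * complex_of_real (Ek y \<xi>)"
proof -
  have "(LINT t|lborel. complex_of_real (Pk y (x - t)) * cis (2*pi*t*\<xi>))
      = \<bar>-1\<bar> *\<^sub>R (LINT s|lborel. complex_of_real (Pk y (x - (x + (-1) * s))) * cis (2*pi*(x + (-1) * s)*\<xi>))"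
    by (rule lborel_integral_real_affine) simp
  also have "\<dots> = (LINT s|lborel. cis (2*pi*x*\<xi>) * (complex_of_real (Pk y s) * cis (-2*pi * s*\<xi>)))"
  proof -
    have e: "complex_of_real (Pk y (x - (x + (-1) * s))) * cis (2*pi*(x + (-1) * s)*\<xi>)
        = cis (2*pi*x*\<xi>) * (complex_of_real (Pk y s) * cis (-2*pi * s*\<xi>))" for s
      by (simp add: cis_mult algebra_simps)
    show ?thesis by (simp only: e) simp
  qed
  also have "\<dots> = cis (2*pi*x*\<xi>) * complex_of_real (Ek y \<xi>)"
    using Pk_ft[OF y, of \<xi>] by simp
  finally show ?thesis .
qed

lemma poisson_ift:
  fixes a :: "real \<Rightarrow> complex"
  assumes a: "integrable lborel a" and y: "y > 0"
  shows "poisson_ext (inv_fourier a) (Complex x y) = inv_fourier (\<lambda>\<xi>. a \<xi> * complex_of_real (Ek y \<xi>)) x"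
proof -
  let ?g = "\<lambda>t. complex_of_real (Pk y (x - t))"
  let ?k = "\<lambda>p. cis (2*pi*fst p * snd p)"
  have km: "?k \<in> borel_measurable borel" by (intro borel_measurable_continuous_onI continuous_intros)
  have "poisson_ext (inv_fourier a) (Complex x y) = (LINT t|lborel. ?g t * (LINT \<xi>|lborel. a \<xi> * ?k (t,\<xi>)))"
    unfolding poisson_ext_def inv_fourier_def
    by (intro Bochner_Integration.integral_cong refl) (simp add: Pk_def mult.commute power2_commute)
  also have "\<dots> = (LINT \<xi>|lborel. a \<xi> * (LINT t|lborel. ?g t * ?k (t,\<xi>)))"
    by (rule swap_int(2)[OF a Pk_shift_int[OF y] km]) simp
  also have "\<dots> = inv_fourier (\<lambda>\<xi>. a \<xi> * complex_of_real (Ek y \<xi>)) x"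
    unfolding inv_fourier_def using Pk_shift_ft[OF y, of x] by (simp add: mult_ac)
  finally show ?thesis .
qed

lemma lborel_complex_eq:
  "lborel = distr (lborel \<Otimes>\<^sub>M lborel) borel (\<lambda>(x,y). Complex x y)"
proof (rule lborel_eqI)
  have m: "(\<lambda>(x,y). Complex x y) \<in> borel_measurable (lborel \<Otimes>\<^sub>M lborel)"
  proof -
    have "(\<lambda>p. Complex (fst p) (snd p)) \<in> borel_measurable (borel :: (real \<times> real) measure)"
      by (intro borel_measurable_continuous_onI) (simp add: Complex_eq continuous_intros)
    then show ?thesis
      by (simp add: case_prod_beta' borel_prod[symmetric] cong: measurable_cong_sets)
  qed
  fix l u :: complex
  assume le: "\<And>b. b \<in> Basis \<Longrightarrow> l \<bullet> b \<le> u \<bullet> b"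
  have le2: "Re l \<le> Re u" "Im l \<le> Im u" using le[of 1] le[of \<i>] by (auto simp: Basis_complex_def)
  have pre: "(\<lambda>(x,y). Complex x y) -` box l u \<inter> space (lborel \<Otimes>\<^sub>M lborel) = {Re l<..<Re u} \<times> {Im l<..<Im u}"
    by (auto simp: box_def Basis_complex_def space_pair_measure)
  have "emeasure (distr (lborel \<Otimes>\<^sub>M lborel) borel (\<lambda>(x,y). Complex x y)) (box l u)
      = emeasure (lborel \<Otimes>\<^sub>M lborel) ({Re l<..<Re u} \<times> {Im l<..<Im u})"
    by (subst emeasure_distr[OF m]) (simp_all add: pre)
  also have "\<dots> = ennreal ((Re u - Re l) * (Im u - Im l))"
    using le2 by (simp add: lborel.emeasure_pair_measure_Times ennreal_mult)
  also have "(Re u - Re l) * (Im u - Im l) = (\<Prod>b\<in>Basis. (u - l) \<bullet> b)"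
    by (simp add: Basis_complex_def)
  finally show "emeasure (distr (lborel \<Otimes>\<^sub>M lborel) borel (\<lambda>(x,y). Complex x y)) (box l u) = (\<Prod>b\<in>Basis. (u - l) \<bullet> b)" .
qed simp

lemma Complex_pair_meas: "(\<lambda>p. Complex (fst p) (snd p)) \<in> (lborel \<Otimes>\<^sub>M lborel) \<rightarrow>\<^sub>M borel"
proof -
  have "(\<lambda>p. Complex (fst p) (snd p)) \<in> borel_measurable (borel :: (real \<times> real) measure)"
    by (intro borel_measurable_continuous_onI) (simp add: Complex_eq continuous_intros)
  then show ?thesis
    by (simp add: borel_prod[symmetric] cong: measurable_cong_sets)
qed

lemma complex_integrable_iff:
  fixes h :: "complex \<Rightarrow> 'a::{banach, second_countable_topology}"
  assumes [measurable]: "h \<in> borel_measurable borel"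
  shows "integrable lborel h \<longleftrightarrow> integrable (lborel \<Otimes>\<^sub>M lborel) (\<lambda>(x,y). h (Complex x y))"
    and "integral\<^sup>L lborel h = integral\<^sup>L (lborel \<Otimes>\<^sub>M lborel) (\<lambda>(x,y). h (Complex x y))"
proof -
  have m: "(\<lambda>(x,y). Complex x y) \<in> (lborel \<Otimes>\<^sub>M lborel) \<rightarrow>\<^sub>M borel"
  proof -
    have "(\<lambda>p. Complex (fst p) (snd p)) \<in> borel_measurable (borel :: (real \<times> real) measure)"
      by (intro borel_measurable_continuous_onI) (simp add: Complex_eq continuous_intros)
    then show ?thesis
      by (simp add: case_prod_beta' borel_prod[symmetric] cong: measurable_cong_sets)
  qed
  show "integrable lborel h \<longleftrightarrow> integrable (lborel \<Otimes>\<^sub>M lborel) (\<lambda>(x,y). h (Complex x y))"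
    by (subst lborel_complex_eq, subst integrable_distr_eq[OF m]) (simp_all add: case_prod_beta')
  show "integral\<^sup>L lborel h = integral\<^sup>L (lborel \<Otimes>\<^sub>M lborel) (\<lambda>(x,y). h (Complex x y))"
    by (subst lborel_complex_eq, subst integral_distr[OF m]) (simp_all add: case_prod_beta')
qed

lemma inv_fourier_cont:
  fixes F :: "real \<Rightarrow> complex"
  assumes F: "integrable lborel F"
  shows "isCont (inv_fourier F) a"
proof (rule continuous_at_sequentiallyI)
  have [measurable]: "F \<in> borel_measurable borel" using F by (simp add: borel_measurable_integrable)
  fix u assume u: "u \<longlonglongrightarrow> a"
  show "(\<lambda>n. inv_fourier F (u n)) \<longlonglongrightarrow> inv_fourier F a"
    unfolding inv_fourier_def
  proof (rule integral_dominated_convergence[where w="\<lambda>\<xi>. norm (F \<xi>)"])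
    show "integrable lborel (\<lambda>\<xi>. norm (F \<xi>))" using F by simp
    show "AE \<xi> in lborel. (\<lambda>n. F \<xi> * cis (2*pi*u n*\<xi>)) \<longlonglongrightarrow> F \<xi> * cis (2*pi*a*\<xi>)"
    proof (rule AE_I2)
      fix \<xi>
      have "(\<lambda>n. 2*pi*u n*\<xi>) \<longlonglongrightarrow> 2*pi*a*\<xi>" by (intro tendsto_intros u)
      then have "(\<lambda>n. cis (2*pi*u n*\<xi>)) \<longlonglongrightarrow> cis (2*pi*a*\<xi>)"
      proof -
        have "continuous_on UNIV cis" using continuous_on_cis[OF continuous_on_id, of UNIV] by simp
        then have ic: "isCont cis (2*pi*a*\<xi>)" by (simp add: continuous_on_eq_continuous_at)
        show ?thesis by (rule isCont_tendsto_compose[OF ic]) fact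
      qed
      then show "(\<lambda>n. F \<xi> * cis (2*pi*u n*\<xi>)) \<longlonglongrightarrow> F \<xi> * cis (2*pi*a*\<xi>)"
        by (rule tendsto_mult_left)
    qed
    show "AE \<xi> in lborel. norm (F \<xi> * cis (2*pi*u n*\<xi>)) \<le> norm (F \<xi>)" for n
      by (simp add: norm_mult)
  qed measurable
qed

lemma fourier_eq_inv: "fourier f \<xi> = inv_fourier f (-\<xi>)"
  unfolding fourier_def inv_fourier_def by (simp add: mult_ac)

lemma fourier_cont: "integrable lborel f \<Longrightarrow> isCont (fourier f) a"
proof -
  assume f: "integrable lborel f"
  have "fourier f = (\<lambda>\<xi>. inv_fourier f (-\<xi>))" by (simp add: fourier_eq_inv[abs_def])
  moreover have "isCont (\<lambda>\<xi>. inv_fourier f (-\<xi>)) a"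
    by (rule isCont_o2[OF _ inv_fourier_cont[OF f]]) (intro continuous_intros)
  ultimately show ?thesis by simp
qed

lemma fourier_bound: "integrable lborel f \<Longrightarrow> norm (fourier f \<xi>) \<le> (LINT x|lborel. norm (f x))"
  unfolding fourier_eq_inv by (rule inv_fourier_bound)

lemma fourier_meas[measurable]: assumes [measurable]: "f \<in> borel_measurable borel" shows "fourier f \<in> borel_measurable borel"
  unfolding fourier_def[abs_def] by measurable

lemma parseval_fourier:
  fixes F G :: "real \<Rightarrow> complex"
  assumes F: "integrable lborel F" and Fc: "\<And>x. isCont F x" and Fb: "\<And>x. norm (F x) \<le> M"
    and G: "integrable lborel G" and Gc: "\<And>x. isCont G x" and Gb: "\<And>x. norm (G x) \<le> M'"
  shows "(LINT \<xi>|lborel. fourier F \<xi> * cnj (fourier G \<xi>)) = (LINT x|lborel. F x * cnj (G x))"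
proof -
  have "(LINT \<xi>|lborel. fourier F \<xi> * cnj (fourier G \<xi>))
      = (LINT \<xi>|lborel. inv_fourier F (0 + (-1) * \<xi>) * cnj (inv_fourier G (0 + (-1) * \<xi>)))"
    by (simp add: fourier_eq_inv)
  also have "\<dots> = (LINT \<xi>|lborel. inv_fourier F \<xi> * cnj (inv_fourier G \<xi>))"
    using lborel_integral_real_affine[of "-1" "\<lambda>\<xi>. inv_fourier F \<xi> * cnj (inv_fourier G \<xi>)" 0] by simp
  also have "\<dots> = (LINT x|lborel. F x * cnj (G x))"
    by (rule parseval(2)[OF F Fc Fb G Gc Gb])
  finally show ?thesis .
qed

lemma schwartz_props:
  fixes \<psi> :: "real \<Rightarrow> complex"
  assumes "schwartz \<psi>"
  shows "\<And>x. isCont \<psi> x" and "\<exists>M. \<forall>x. norm (\<psi> x) \<le> M" and "integrable lborel \<psi>"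
proof -
  obtain F :: "nat \<Rightarrow> real \<Rightarrow> complex" where F0: "F 0 = \<psi>"
    and Fd: "\<And>n x. (F n has_vector_derivative F (Suc n) x) (at x)"
    and Fb: "\<And>k n. \<exists>C. \<forall>x. \<bar>x\<bar> ^ k * norm (F n x) \<le> C"
    using assms unfolding schwartz_def by blast
  show c: "isCont \<psi> x" for x
    using has_vector_derivative_continuous[OF Fd[of 0 x]] F0 by simp
  obtain C0 where C0: "\<And>x. norm (\<psi> x) \<le> C0" using Fb[of 0 0] F0 by auto
  obtain C2 where C2: "\<And>x. \<bar>x\<bar>^2 * norm (\<psi> x) \<le> C2" using Fb[of 2 0] F0 by auto
  show "\<exists>M. \<forall>x. norm (\<psi> x) \<le> M" using C0 by blast
  have h: "integrable lborel (\<lambda>x::real. inverse (1 + x^2))"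
    using integrable_inverse_1_plus_square by (simp add: set_integrable_def)
  have m: "\<psi> \<in> borel_measurable borel"
    by (intro borel_measurable_continuous_onI continuous_at_imp_continuous_on ballI c)
  show "integrable lborel \<psi>"
  proof (rule Bochner_Integration.integrable_bound[OF integrable_mult_right[OF h, of "C0 + C2"]])
    show "\<psi> \<in> borel_measurable lborel" using m by simp
    show "AE x in lborel. norm (\<psi> x) \<le> norm ((C0 + C2) * inverse (1 + x^2))"
    proof (rule AE_I2)
      fix x :: real
      have p: "1 + x^2 > 0" by (simp add: add_pos_nonneg)
      have "norm (\<psi> x) * (1 + x^2) \<le> C0 + C2" using C0[of x] C2[of x] by (simp add: algebra_simps)
      then have "norm (\<psi> x) \<le> (C0 + C2) / (1 + x^2)" using p by (simp add: field_simps)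
      also have "\<dots> \<le> norm ((C0 + C2) * inverse (1 + x^2))" by (simp add: divide_inverse)
      finally show "norm (\<psi> x) \<le> norm ((C0 + C2) * inverse (1 + x^2))" .
    qed
  qed
qed

lemma dlen_pos: "dlen I > 0" by (simp add: dlen_def split: prod.splits)

lemma psiI_props:
  fixes \<psi> :: "real \<Rightarrow> complex"
  assumes s: "schwartz \<psi>"
  shows "integrable lborel (psi_I \<psi> I)" and "\<And>x. isCont (psi_I \<psi> I) x" and "\<exists>M. \<forall>x. norm (psi_I \<psi> I x) \<le> M"
proof -
  let ?L = "dlen I" and ?c = "dcenter I"
  have L: "?L > 0" by (rule dlen_pos)
  note sp = schwartz_props[OF s]
  have "integrable lborel (\<lambda>x. \<psi> (-?c/?L + (1/?L) * x))"
    using L by (intro lborel_integrable_real_affine[OF sp(3)]) simp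
  then have "integrable lborel (\<lambda>x. complex_of_real (?L powr (-1/2)) * \<psi> (-?c/?L + (1/?L) * x))"
    by (rule integrable_mult_right)
  moreover have "(\<lambda>x. complex_of_real (?L powr (-1/2)) * \<psi> (-?c/?L + (1/?L) * x)) = psi_I \<psi> I"
    using L by (auto simp: psi_I_def diff_divide_distrib intro!: ext)
  ultimately show "integrable lborel (psi_I \<psi> I)" by simp
  show "isCont (psi_I \<psi> I) x" for x
    unfolding psi_I_def[abs_def]
    by (intro continuous_intros isCont_o2[OF _ sp(1)]) (use L in auto)
  obtain M where M: "\<And>x. norm (\<psi> x) \<le> M" using sp(2) by blast
  show "\<exists>M. \<forall>x. norm (psi_I \<psi> I x) \<le> M"
    by (rule exI[of _ "\<bar>?L powr (-1/2)\<bar> * M"]) (auto simp: psi_I_def norm_mult intro!: mult_left_mono M)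
qed

lemma fourier_psiI:
  fixes \<psi> :: "real \<Rightarrow> complex"
  assumes "integrable lborel \<psi>"
  shows "fourier (psi_I \<psi> I) \<xi> = complex_of_real (sqrt (dlen I)) * cis (-2*pi*dcenter I*\<xi>) * fourier \<psi> (dlen I * \<xi>)"
proof -
  let ?L = "dlen I" and ?c = "dcenter I"
  have L: "?L > 0" by (rule dlen_pos)
  have "fourier (psi_I \<psi> I) \<xi> = \<bar>?L\<bar> *\<^sub>R (LINT u|lborel. psi_I \<psi> I (?c + ?L * u) * cis (-2*pi*(?c + ?L * u)*\<xi>))"
    unfolding fourier_def using L by (intro lborel_integral_real_affine) simp
  also have "\<dots> = complex_of_real (?L * ?L powr (-1/2)) * cis (-2*pi*?c*\<xi>) * (LINT u|lborel. \<psi> u * cis (-2*pi*u*(?L*\<xi>)))"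
  proof -
    have e: "psi_I \<psi> I (?c + ?L * u) * cis (-2*pi*(?c + ?L * u)*\<xi>)
        = (complex_of_real (?L powr (-1/2)) * cis (-2*pi*?c*\<xi>)) * (\<psi> u * cis (-2*pi*u*(?L*\<xi>)))" for u
      using L by (simp add: psi_I_def cis_mult algebra_simps)
    show ?thesis using L by (simp only: e integral_mult_right_zero) (simp add: scaleR_conv_of_real mult_ac)
  qed
  also have "?L * ?L powr (-1/2) = sqrt ?L"
  proof -
    have "?L * ?L powr (-1/2) = ?L powr (1/2)" using powr_add[of ?L 1 "-1/2"] L by simp
    also have "\<dots> = sqrt ?L" using L by (simp add: powr_half_sqrt)
    finally show ?thesis .
  qed
  finally show ?thesis by (simp add: fourier_def)
qed

definition AI :: "(real \<Rightarrow> complex) \<Rightarrow> int \<times> int \<Rightarrow> real \<Rightarrow> complex" where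
  "AI \<psi> I \<xi> = complex_of_real (sqrt (dlen I) * (4*pi*\<bar>\<xi>\<bar>)) * fourier (psi_I \<psi> I) \<xi>"

lemma fI_eq: "f_I \<psi> I = inv_fourier (AI \<psi> I)"
proof (rule ext)
  fix x
  have "f_I \<psi> I x = complex_of_real (sqrt (dlen I)) * (LINT \<xi>|lborel. complex_of_real (4 * pi * \<bar>\<xi>\<bar>) * fourier (psi_I \<psi> I) \<xi> * cis (2 * pi * x * \<xi>))"
    unfolding f_I_def Dop_def inv_fourier_def ..
  also have "\<dots> = (LINT \<xi>|lborel. complex_of_real (sqrt (dlen I)) * (complex_of_real (4 * pi * \<bar>\<xi>\<bar>) * fourier (psi_I \<psi> I) \<xi> * cis (2 * pi * x * \<xi>)))"
    by (rule integral_mult_right_zero[symmetric])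
  also have "\<dots> = inv_fourier (AI \<psi> I) x"
    unfolding inv_fourier_def AI_def by (intro Bochner_Integration.integral_cong refl) (simp add: mult_ac)
  finally show "f_I \<psi> I x = inv_fourier (AI \<psi> I) x" .
qed

lemma ft_zero:
  fixes \<psi> :: "real \<Rightarrow> complex"
  assumes ft_supp: "closure {\<xi>. fourier \<psi> \<xi> \<noteq> 0} \<subseteq> {-4/3..-1/3} \<union> {1/3..4/3}"
    and "\<bar>\<eta>\<bar> > 4/3"
  shows "fourier \<psi> \<eta> = 0"
proof (rule ccontr)
  assume "fourier \<psi> \<eta> \<noteq> 0"
  then have "\<eta> \<in> {\<xi>. fourier \<psi> \<xi> \<noteq> 0}" by simp
  then have "\<eta> \<in> closure {\<xi>. fourier \<psi> \<xi> \<noteq> 0}" by (rule closure_subset[THEN subsetD])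
  then have "\<eta> \<in> {-4/3..-1/3} \<union> {1/3..4/3}" using ft_supp by (rule subsetD[rotated])
  then have "\<bar>\<eta>\<bar> \<le> 4/3" by auto
  then show False using assms(2) by simp
qed

lemma AI_props:
  fixes \<psi> :: "real \<Rightarrow> complex"
  assumes s: "schwartz \<psi>"
    and ft_supp: "closure {\<xi>. fourier \<psi> \<xi> \<noteq> 0} \<subseteq> {-4/3..-1/3} \<union> {1/3..4/3}"
  shows "\<And>x. isCont (AI \<psi> I) x" and "\<exists>M. \<forall>x. norm (AI \<psi> I x) \<le> M" and "integrable lborel (AI \<psi> I)"
    and "AI \<psi> I \<in> borel_measurable borel"
    and "\<And>\<xi>. \<bar>\<xi>\<bar> > 4/3 / dlen I \<Longrightarrow> fourier (psi_I \<psi> I) \<xi> = 0"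
proof -
  let ?L = "dlen I"
  have L: "?L > 0" by (rule dlen_pos)
  note pp = psiI_props[OF s, where I=I]
  note sp = schwartz_props[OF s]
  show cont: "isCont (AI \<psi> I) x" for x
    unfolding AI_def[abs_def] by (intro continuous_intros fourier_cont pp(1))
  show meas: "AI \<psi> I \<in> borel_measurable borel"
    by (intro borel_measurable_continuous_onI continuous_at_imp_continuous_on ballI cont)
  show z: "fourier (psi_I \<psi> I) \<xi> = 0" if "\<bar>\<xi>\<bar> > 4/3 / ?L" for \<xi>
  proof -
    have "\<bar>?L * \<xi>\<bar> > 4/3" using that L by (simp add: abs_mult field_simps)
    then show ?thesis using fourier_psiI[OF sp(3), of I \<xi>] ft_zero[OF ft_supp] by simp
  qed
  define N where "N = (LINT x|lborel. norm (psi_I \<psi> I x))"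
  define K where "K = sqrt ?L * (4*pi*(4/3/?L)) * N"
  have K0: "K \<ge> 0" unfolding K_def N_def using L by (auto intro!: mult_nonneg_nonneg integral_nonneg_AE)
  have bnd: "norm (AI \<psi> I \<xi>) \<le> K * indicator {-(4/3/?L)..4/3/?L} \<xi>" for \<xi>
  proof (cases "\<bar>\<xi>\<bar> > 4/3 / ?L")
    case True then show ?thesis using K0 by (simp add: AI_def z indicator_def)
  next
    case False
    then have "\<xi> \<in> {-(4/3/?L)..4/3/?L}" by auto
    moreover have "norm (AI \<psi> I \<xi>) \<le> K"
    proof -
      have a1: "\<bar>\<xi>\<bar> \<le> 4/3/?L" using False by simp
      have "norm (complex_of_real (sqrt ?L * (4*pi*\<bar>\<xi>\<bar>))) = sqrt ?L * (4*pi*\<bar>\<xi>\<bar>)"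
        using L by (simp only: norm_of_real) (simp add: abs_mult)
      also have "\<dots> \<le> sqrt ?L * (4*pi*(4/3/?L))"
        using a1 L by (intro mult_left_mono) auto
      finally have "norm (complex_of_real (sqrt ?L * (4*pi*\<bar>\<xi>\<bar>))) \<le> sqrt ?L * (4*pi*(4/3/?L))" .
      then show ?thesis
        unfolding AI_def K_def N_def norm_mult
        using fourier_bound[OF pp(1), of \<xi>] L by (intro mult_mono) auto
    qed
    ultimately show ?thesis by simp
  qed
  show "\<exists>M. \<forall>x. norm (AI \<psi> I x) \<le> M"
    using bnd K0 by (intro exI[of _ K] allI) (rule order_trans[OF bnd], simp add: indicator_def)
  show "integrable lborel (AI \<psi> I)"
  proof (rule Bochner_Integration.integrable_bound[where f="\<lambda>\<xi>. K * indicator {-(4/3/?L)..4/3/?L} \<xi>"])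
    show "integrable lborel (\<lambda>\<xi>. K * indicator {-(4/3/?L)..4/3/?L} \<xi>)"
      by (intro integrable_mult_right integrable_real_indicator) (auto simp: emeasure_lborel_Icc_eq)
  qed (use meas bnd K0 in \<open>auto intro!: AE_I2 order_trans[OF bnd]\<close>)
qed

lemma y_int:
  fixes b :: real assumes b: "b > 0"
  shows "integrable lborel (\<lambda>y. indicator {0<..} y * y * exp (-(b*y)))"
    and "(LINT y|lborel. indicator {0<..} y * y * exp (-(b*y))) = 1 / b^2"
    and "(\<integral>\<^sup>+y. ennreal (indicator {0<..} y * y * exp (-(b*y))) \<partial>lborel) = ennreal (1 / b^2)"
proof -
  have "has_bochner_integral lborel (\<lambda>x. x^1 * exp (-x) * indicator {0 <..} x::real) (fact 1)"
    by (rule has_bochner_integral_I0i_power_exp_m)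
  then have "has_bochner_integral lborel (\<lambda>y. (0 + b * y)^1 * exp (-(0 + b * y)) * indicator {0 <..} (0 + b * y)::real) (1 /\<^sub>R \<bar>b\<bar>)"
    using lborel_has_bochner_integral_real_affine_iff[of b "\<lambda>x. x^1 * exp (-x) * indicator {0 <..} x::real" 1 0] b by simp
  then have "has_bochner_integral lborel (\<lambda>y. (1/b) * ((0 + b * y)^1 * exp (-(0 + b * y)) * indicator {0 <..} (0 + b * y)::real)) ((1/b) * (1 /\<^sub>R \<bar>b\<bar>))"
    by (rule has_bochner_integral_mult_right)
  moreover have "(\<lambda>y. (1/b) * ((0 + b * y)^1 * exp (-(0 + b * y)) * indicator {0 <..} (0 + b * y)::real)) = (\<lambda>y. indicator {0<..} y * y * exp (-(b*y)))"
    using b by (auto intro!: ext simp: indicator_def zero_less_mult_iff)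
  moreover have "(1/b) * (1 /\<^sub>R \<bar>b\<bar>) = 1 / b^2" using b by (simp add: power2_eq_square field_simps)
  ultimately have hb: "has_bochner_integral lborel (\<lambda>y. indicator {0<..} y * y * exp (-(b*y))) (1 / b^2)" by simp
  show i: "integrable lborel (\<lambda>y. indicator {0<..} y * y * exp (-(b*y)))" using hb by (rule integrable.intros)
  show v: "(LINT y|lborel. indicator {0<..} y * y * exp (-(b*y))) = 1 / b^2" using hb by (rule has_bochner_integral_integral_eq)
  show "(\<integral>\<^sup>+y. ennreal (indicator {0<..} y * y * exp (-(b*y))) \<partial>lborel) = ennreal (1 / b^2)"
    using nn_integral_eq_integral[OF i] v by (simp add: indicator_def)
qed

lemma pair_integrableI:
  fixes f :: "real \<times> real \<Rightarrow> 'a::{banach, second_countable_topology}"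
  assumes [measurable]: "f \<in> borel_measurable (lborel \<Otimes>\<^sub>M lborel)"
    and fin: "(\<integral>\<^sup>+ y. (\<integral>\<^sup>+ x. ennreal (norm (f (x, y))) \<partial>lborel) \<partial>lborel) < \<infinity>"
  shows "integrable (lborel \<Otimes>\<^sub>M lborel) f"
proof (rule integrableI_bounded)
  show "(\<integral>\<^sup>+ p. ennreal (norm (f p)) \<partial>(lborel \<Otimes>\<^sub>M lborel)) < \<infinity>"
    using fin by (simp add: lborel_pair.nn_integral_snd[symmetric])
qed simp

lemma nn_y_xi:
  fixes w :: "real \<Rightarrow> real"
  assumes [measurable]: "w \<in> borel_measurable borel" and w0: "\<And>\<xi>. w \<xi> \<ge> 0"
  shows "(\<integral>\<^sup>+ y. (\<integral>\<^sup>+ \<xi>. ennreal (indicator {0<..} y * y * w \<xi> * exp (-((4*pi*\<bar>\<xi>\<bar>)*y))) \<partial>lborel) \<partial>lborel)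
       = (\<integral>\<^sup>+ \<xi>. ennreal (w \<xi> / (4*pi*\<bar>\<xi>\<bar>)^2) \<partial>lborel)"
proof -
  have "(\<integral>\<^sup>+ y. (\<integral>\<^sup>+ \<xi>. ennreal (indicator {0<..} y * y * w \<xi> * exp (-((4*pi*\<bar>\<xi>\<bar>)*y))) \<partial>lborel) \<partial>lborel)
      = (\<integral>\<^sup>+ \<xi>. (\<integral>\<^sup>+ y. ennreal (indicator {0<..} y * y * w \<xi> * exp (-((4*pi*\<bar>\<xi>\<bar>)*y))) \<partial>lborel) \<partial>lborel)"
    by (rule lborel_pair.Fubini') measurable
  also have "\<dots> = (\<integral>\<^sup>+ \<xi>. ennreal (w \<xi> / (4*pi*\<bar>\<xi>\<bar>)^2) \<partial>lborel)"
  proof (rule nn_integral_cong_AE)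
    show "AE \<xi> in lborel. (\<integral>\<^sup>+ y. ennreal (indicator {0<..} y * y * w \<xi> * exp (-((4*pi*\<bar>\<xi>\<bar>)*y))) \<partial>lborel) = ennreal (w \<xi> / (4*pi*\<bar>\<xi>\<bar>)^2)"
      using AE_lborel_singleton[of 0]
    proof eventually_elim
      case (elim \<xi>)
      then have b: "4*pi*\<bar>\<xi>\<bar> > 0" by simp
      have "(\<integral>\<^sup>+ y. ennreal (indicator {0<..} y * y * w \<xi> * exp (-((4*pi*\<bar>\<xi>\<bar>)*y))) \<partial>lborel)
          = (\<integral>\<^sup>+ y. ennreal (w \<xi>) * ennreal (indicator {0<..} y * y * exp (-((4*pi*\<bar>\<xi>\<bar>)*y))) \<partial>lborel)"
        by (intro nn_integral_cong) (auto simp: ennreal_mult'[symmetric] w0 mult_ac indicator_def)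
      also have "\<dots> = ennreal (w \<xi>) * ennreal (1 / (4*pi*\<bar>\<xi>\<bar>)^2)"
        by (subst nn_integral_cmult) (auto simp: y_int(3)[OF b])
      also have "\<dots> = ennreal (w \<xi> / (4*pi*\<bar>\<xi>\<bar>)^2)"
        using w0 by (simp add: ennreal_mult'[symmetric] divide_inverse)
      finally show ?case .
    qed
  qed
  finally show ?thesis .
qed

lemma poisson_meas[measurable]:
  assumes [measurable]: "f \<in> borel_measurable borel"
  shows "poisson_ext f \<in> borel_measurable borel"
  unfolding poisson_ext_def[abs_def] by measurable

lemma Ek_sq: "(Ek y \<xi>)^2 = exp (-((4*pi*\<bar>\<xi>\<bar>)*y))"
  by (simp add: Ek_def power2_eq_square exp_add[symmetric] algebra_simps)

context
  fixes \<psi> :: "real \<Rightarrow> complex"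
  assumes schw: "schwartz \<psi>"
    and ft_supp: "closure {\<xi>. fourier \<psi> \<xi> \<noteq> 0} \<subseteq> {-4/3..-1/3} \<union> {1/3..4/3}"
begin

lemma B_props:
  assumes y: "y > 0"
  shows "integrable lborel (\<lambda>\<xi>. AI \<psi> I \<xi> * complex_of_real (Ek y \<xi>))"
    and "\<And>x. isCont (\<lambda>\<xi>. AI \<psi> I \<xi> * complex_of_real (Ek y \<xi>)) x"
    and "\<exists>M. \<forall>x. norm (AI \<psi> I x * complex_of_real (Ek y x)) \<le> M"
proof -
  note ap = AI_props[OF schw ft_supp, where I=I]
  show "integrable lborel (\<lambda>\<xi>. AI \<psi> I \<xi> * complex_of_real (Ek y \<xi>))"
    by (rule Bochner_Integration.integrable_bound[OF ap(3)])
       (use ap(4) y Ek_le1[of y] Ek_pos[of y] in \<open>auto intro!: AE_I2 simp: norm_mult mult_left_le\<close>)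
  show "isCont (\<lambda>\<xi>. AI \<psi> I \<xi> * complex_of_real (Ek y \<xi>)) x" for x
    by (intro continuous_intros ap(1) isCont_o2[OF Ek_cont])
  obtain M where M: "\<And>x. norm (AI \<psi> I x) \<le> M" using ap(2) by blast
  show "\<exists>M. \<forall>x. norm (AI \<psi> I x * complex_of_real (Ek y x)) \<le> M"
  proof (intro exI allI)
    fix x
    have "norm (AI \<psi> I x * complex_of_real (Ek y x)) = norm (AI \<psi> I x) * Ek y x"
      using Ek_pos[of y x] by (simp add: norm_mult)
    also have "\<dots> \<le> norm (AI \<psi> I x)" using Ek_pos[of y x] Ek_le1[of y x] y by (simp add: mult_left_le)
    also have "\<dots> \<le> M" by (rule M)
    finally show "norm (AI \<psi> I x * complex_of_real (Ek y x)) \<le> M" .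
  qed
qed

lemma U_eq:
  assumes y: "y > 0"
  shows "poisson_ext (f_I \<psi> I) (Complex x y) = inv_fourier (\<lambda>\<xi>. AI \<psi> I \<xi> * complex_of_real (Ek y \<xi>)) x"
  unfolding fI_eq by (rule poisson_ift[OF AI_props(3)[OF schw ft_supp] y])

lemma fI_meas[measurable]: "f_I \<psi> I \<in> borel_measurable borel"
  unfolding fI_eq using AI_props(4)[OF schw ft_supp] by measurable

lemma X1:
  assumes y: "y > 0"
  shows "integrable lborel (\<lambda>x. (norm (poisson_ext (f_I \<psi> I) (Complex x y)))^2)"
    and "(LINT x|lborel. (norm (poisson_ext (f_I \<psi> I) (Complex x y)))^2) = (LINT \<xi>|lborel. (norm (AI \<psi> I \<xi>))^2 * exp (-((4*pi*\<bar>\<xi>\<bar>)*y)))"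
proof -
  note bp = B_props[OF y, where I=I]
  obtain M where M: "\<And>x. norm (AI \<psi> I x * complex_of_real (Ek y x)) \<le> M" using bp(3) by blast
  show "integrable lborel (\<lambda>x. (norm (poisson_ext (f_I \<psi> I) (Complex x y)))^2)"
    unfolding U_eq[OF y] by (rule plancherel(1)[OF bp(1) bp(2) M])
  have "(LINT x|lborel. (norm (poisson_ext (f_I \<psi> I) (Complex x y)))^2) = (LINT \<xi>|lborel. (norm (AI \<psi> I \<xi> * complex_of_real (Ek y \<xi>)))^2)"
    unfolding U_eq[OF y] by (rule plancherel(2)[OF bp(1) bp(2) M])
  also have "\<dots> = (LINT \<xi>|lborel. (norm (AI \<psi> I \<xi>))^2 * exp (-((4*pi*\<bar>\<xi>\<bar>)*y)))"
    by (intro Bochner_Integration.integral_cong refl) (simp add: norm_mult power_mult_distrib Ek_sq[symmetric] Ek_pos)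
  finally show "(LINT x|lborel. (norm (poisson_ext (f_I \<psi> I) (Complex x y)))^2) = (LINT \<xi>|lborel. (norm (AI \<psi> I \<xi>))^2 * exp (-((4*pi*\<bar>\<xi>\<bar>)*y)))" .
qed

lemma X2:
  assumes y: "y > 0"
  shows "integrable lborel (\<lambda>x. poisson_ext (f_I \<psi> I) (Complex x y) * cnj (poisson_ext (f_I \<psi> J) (Complex x y)))"
    and "(LINT x|lborel. poisson_ext (f_I \<psi> I) (Complex x y) * cnj (poisson_ext (f_I \<psi> J) (Complex x y)))
       = (LINT \<xi>|lborel. AI \<psi> I \<xi> * cnj (AI \<psi> J \<xi>) * complex_of_real (exp (-((4*pi*\<bar>\<xi>\<bar>)*y))))"
proof -
  note bI = B_props[OF y, where I=I] and bJ = B_props[OF y, where I=J]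
  obtain M where M: "\<And>x. norm (AI \<psi> I x * complex_of_real (Ek y x)) \<le> M" using bI(3) by blast
  obtain M' where M': "\<And>x. norm (AI \<psi> J x * complex_of_real (Ek y x)) \<le> M'" using bJ(3) by blast
  show "integrable lborel (\<lambda>x. poisson_ext (f_I \<psi> I) (Complex x y) * cnj (poisson_ext (f_I \<psi> J) (Complex x y)))"
    unfolding U_eq[OF y] by (rule parseval(1)[OF bI(1) bI(2) M bJ(1) bJ(2) M'])
  have "(LINT x|lborel. poisson_ext (f_I \<psi> I) (Complex x y) * cnj (poisson_ext (f_I \<psi> J) (Complex x y)))
      = (LINT \<xi>|lborel. (AI \<psi> I \<xi> * complex_of_real (Ek y \<xi>)) * cnj (AI \<psi> J \<xi> * complex_of_real (Ek y \<xi>)))"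
    unfolding U_eq[OF y] by (rule parseval(2)[OF bI(1) bI(2) M bJ(1) bJ(2) M'])
  also have "\<dots> = (LINT \<xi>|lborel. AI \<psi> I \<xi> * cnj (AI \<psi> J \<xi>) * complex_of_real (exp (-((4*pi*\<bar>\<xi>\<bar>)*y))))"
  proof (intro Bochner_Integration.integral_cong refl)
    fix \<xi>
    have ec: "complex_of_real (Ek y \<xi>) * complex_of_real (Ek y \<xi>) = complex_of_real (exp (-((4*pi*\<bar>\<xi>\<bar>)*y)))"
      by (simp only: of_real_mult[symmetric] Ek_sq[symmetric] power2_eq_square)
    have "(AI \<psi> I \<xi> * complex_of_real (Ek y \<xi>)) * cnj (AI \<psi> J \<xi> * complex_of_real (Ek y \<xi>))
        = AI \<psi> I \<xi> * cnj (AI \<psi> J \<xi>) * (complex_of_real (Ek y \<xi>) * complex_of_real (Ek y \<xi>))"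
      by (simp add: mult_ac)
    then show "(AI \<psi> I \<xi> * complex_of_real (Ek y \<xi>)) * cnj (AI \<psi> J \<xi> * complex_of_real (Ek y \<xi>))
        = AI \<psi> I \<xi> * cnj (AI \<psi> J \<xi>) * complex_of_real (exp (-((4*pi*\<bar>\<xi>\<bar>)*y)))"
      by (simp only: ec)
  qed
  finally show "(LINT x|lborel. poisson_ext (f_I \<psi> I) (Complex x y) * cnj (poisson_ext (f_I \<psi> J) (Complex x y)))
       = (LINT \<xi>|lborel. AI \<psi> I \<xi> * cnj (AI \<psi> J \<xi>) * complex_of_real (exp (-((4*pi*\<bar>\<xi>\<bar>)*y))))" .
qed

end

context
  fixes \<psi> :: "real \<Rightarrow> complex"
  assumes schw: "schwartz \<psi>"
    and ft_supp: "closure {\<xi>. fourier \<psi> \<xi> \<noteq> 0} \<subseteq> {-4/3..-1/3} \<union> {1/3..4/3}"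
begin

lemma fsq_int: "integrable lborel (\<lambda>\<xi>. (norm (fourier (psi_I \<psi> I) \<xi>))^2)"
proof -
  note pp = psiI_props[OF schw, where I=I]
  obtain M where M: "\<And>x. norm (psi_I \<psi> I x) \<le> M" using pp(3) by blast
  have "integrable lborel (\<lambda>x. (norm (inv_fourier (psi_I \<psi> I) x))^2)"
    by (rule plancherel(1)[OF pp(1) pp(2) M])
  then have "integrable lborel (\<lambda>\<xi>. (norm (inv_fourier (psi_I \<psi> I) (0 + (-1) * \<xi>)))^2)"
    by (rule lborel_integrable_real_affine) simp
  then show ?thesis by (simp add: fourier_eq_inv)
qed

lemma AI_sq: "\<xi> \<noteq> 0 \<Longrightarrow> (norm (AI \<psi> I \<xi>))^2 / (4*pi*\<bar>\<xi>\<bar>)^2 = dlen I * (norm (fourier (psi_I \<psi> I) \<xi>))^2"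
  using dlen_pos[of I] by (simp add: AI_def norm_mult power_mult_distrib abs_mult)

lemma AI_prod: "\<xi> \<noteq> 0 \<Longrightarrow> AI \<psi> I \<xi> * cnj (AI \<psi> J \<xi>) * complex_of_real (1 / (4*pi*\<bar>\<xi>\<bar>)^2)
   = complex_of_real (sqrt (dlen I * dlen J)) * (fourier (psi_I \<psi> I) \<xi> * cnj (fourier (psi_I \<psi> J) \<xi>))"
  using dlen_pos[of I] dlen_pos[of J]
  by (simp add: AI_def real_sqrt_mult power2_eq_square field_simps)


lemma AI_sq_int:
  assumes y: "y > 0"
  shows "integrable lborel (\<lambda>\<xi>. (norm (AI \<psi> I \<xi>))^2 * exp (-((4*pi*\<bar>\<xi>\<bar>)*y)))"
proof -
  note ap = AI_props[OF schw ft_supp, where I=I]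
  obtain M where M: "\<And>x. norm (AI \<psi> I x) \<le> M" using ap(2) by blast
  have "integrable lborel (\<lambda>\<xi>. M * norm (AI \<psi> I \<xi>))" using ap(3) by simp
  then show ?thesis
  proof (rule Bochner_Integration.integrable_bound)
    show "(\<lambda>\<xi>. (norm (AI \<psi> I \<xi>))^2 * exp (-((4*pi*\<bar>\<xi>\<bar>)*y))) \<in> borel_measurable lborel"
      using ap(4) by measurable
    show "AE \<xi> in lborel. norm ((norm (AI \<psi> I \<xi>))^2 * exp (-((4*pi*\<bar>\<xi>\<bar>)*y))) \<le> norm (M * norm (AI \<psi> I \<xi>))"
    proof (rule AE_I2)
      fix \<xi>
      have e: "exp (-((4*pi*\<bar>\<xi>\<bar>)*y)) \<le> 1" using y by simp
      have "norm ((norm (AI \<psi> I \<xi>))^2 * exp (-((4*pi*\<bar>\<xi>\<bar>)*y))) = norm (AI \<psi> I \<xi>) * norm (AI \<psi> I \<xi>) * exp (-((4*pi*\<bar>\<xi>\<bar>)*y))"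
        by (simp add: power2_eq_square)
      also have "\<dots> \<le> norm (AI \<psi> I \<xi>) * norm (AI \<psi> I \<xi>)" using e by (simp add: mult_left_le)
      also have "\<dots> \<le> M * norm (AI \<psi> I \<xi>)" using M by (simp add: mult_right_mono)
      also have "\<dots> \<le> norm (M * norm (AI \<psi> I \<xi>))" by simp
      finally show "norm ((norm (AI \<psi> I \<xi>))^2 * exp (-((4*pi*\<bar>\<xi>\<bar>)*y))) \<le> norm (M * norm (AI \<psi> I \<xi>))" .
    qed
  qed
qed

lemma W_fin:
  "(\<integral>\<^sup>+ \<xi>. ennreal (((norm (AI \<psi> I \<xi>))^2 + (norm (AI \<psi> J \<xi>))^2) / (4*pi*\<bar>\<xi>\<bar>)^2) \<partial>lborel) < \<infinity>"
proof -
  let ?v = "\<lambda>\<xi>. dlen I * (norm (fourier (psi_I \<psi> I) \<xi>))^2 + dlen J * (norm (fourier (psi_I \<psi> J) \<xi>))^2"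
  have iv: "integrable lborel ?v" using fsq_int[of I] fsq_int[of J] by simp
  have "(\<integral>\<^sup>+ \<xi>. ennreal (((norm (AI \<psi> I \<xi>))^2 + (norm (AI \<psi> J \<xi>))^2) / (4*pi*\<bar>\<xi>\<bar>)^2) \<partial>lborel)
      = (\<integral>\<^sup>+ \<xi>. ennreal (?v \<xi>) \<partial>lborel)"
  proof (rule nn_integral_cong_AE)
    show "AE \<xi> in lborel. ennreal (((norm (AI \<psi> I \<xi>))^2 + (norm (AI \<psi> J \<xi>))^2) / (4*pi*\<bar>\<xi>\<bar>)^2) = ennreal (?v \<xi>)"
      using AE_lborel_singleton[of 0] by eventually_elim (simp add: add_divide_distrib AI_sq)
  qed
  also have "\<dots> = ennreal (LINT \<xi>|lborel. ?v \<xi>)"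
    by (rule nn_integral_eq_integral[OF iv]) (auto intro!: add_nonneg_nonneg mult_nonneg_nonneg less_imp_le[OF dlen_pos])
  finally show ?thesis by simp
qed

end

context
  fixes \<psi> :: "real \<Rightarrow> complex"
  assumes schw: "schwartz \<psi>"
    and ft_supp: "closure {\<xi>. fourier \<psi> \<xi> \<noteq> 0} \<subseteq> {-4/3..-1/3} \<union> {1/3..4/3}"
begin

lemma xbound:
  fixes I J :: "int \<times> int"
  defines "W \<equiv> \<lambda>\<xi>. (norm (AI \<psi> I \<xi>))^2 + (norm (AI \<psi> J \<xi>))^2"
  shows "(\<integral>\<^sup>+ x. ennreal (norm (indicator {0<..} y *\<^sub>R (poisson_ext (f_I \<psi> I) (Complex x y) * cnj (poisson_ext (f_I \<psi> J) (Complex x y)) * complex_of_real y))) \<partial>lborel)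
     \<le> (\<integral>\<^sup>+ \<xi>. ennreal (indicator {0<..} y * y * W \<xi> * exp (-((4*pi*\<bar>\<xi>\<bar>)*y))) \<partial>lborel)"
proof (cases "y > 0")
  case False
  then show ?thesis by (simp add: indicator_def)
next
  case y: True
  let ?P = "\<lambda>x. poisson_ext (f_I \<psi> I) (Complex x y)" and ?Q = "\<lambda>x. poisson_ext (f_I \<psi> J) (Complex x y)"
  have i1: "integrable lborel (\<lambda>x. y * ((norm (?P x))^2 + (norm (?Q x))^2))"
    using X1(1)[OF schw ft_supp y, of I] X1(1)[OF schw ft_supp y, of J] by simp
  have "(\<integral>\<^sup>+ x. ennreal (norm (indicator {0<..} y *\<^sub>R (?P x * cnj (?Q x) * complex_of_real y))) \<partial>lborel)
      \<le> (\<integral>\<^sup>+ x. ennreal (y * ((norm (?P x))^2 + (norm (?Q x))^2)) \<partial>lborel)"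
  proof (rule nn_integral_mono, rule ennreal_leI)
    fix x
    have "norm (indicator {0<..} y *\<^sub>R (?P x * cnj (?Q x) * complex_of_real y)) = y * (norm (?P x) * norm (?Q x))"
      using y by (simp add: norm_mult)
    also have "\<dots> \<le> y * ((norm (?P x))^2 + (norm (?Q x))^2)"
      using y sum_squares_bound[of "norm (?P x)" "norm (?Q x)"] mult_nonneg_nonneg[OF norm_ge_zero norm_ge_zero, of "?P x" "?Q x"]
      by (intro mult_left_mono) linarith+
    finally show "norm (indicator {0<..} y *\<^sub>R (?P x * cnj (?Q x) * complex_of_real y)) \<le> y * ((norm (?P x))^2 + (norm (?Q x))^2)" .
  qed
  also have "\<dots> = ennreal (LINT x|lborel. y * ((norm (?P x))^2 + (norm (?Q x))^2))"
    by (rule nn_integral_eq_integral[OF i1]) (use y in auto)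
  also have "(LINT x|lborel. y * ((norm (?P x))^2 + (norm (?Q x))^2)) = (LINT \<xi>|lborel. y * W \<xi> * exp (-((4*pi*\<bar>\<xi>\<bar>)*y)))"
  proof -
    have "(LINT x|lborel. y * ((norm (?P x))^2 + (norm (?Q x))^2)) = y * ((LINT x|lborel. (norm (?P x))^2) + (LINT x|lborel. (norm (?Q x))^2))"
      using X1(1)[OF schw ft_supp y, of I] X1(1)[OF schw ft_supp y, of J] by simp
    also have "\<dots> = y * ((LINT \<xi>|lborel. (norm (AI \<psi> I \<xi>))^2 * exp (-((4*pi*\<bar>\<xi>\<bar>)*y))) + (LINT \<xi>|lborel. (norm (AI \<psi> J \<xi>))^2 * exp (-((4*pi*\<bar>\<xi>\<bar>)*y))))"
      by (simp only: X1(2)[OF schw ft_supp y])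
    also have "\<dots> = (LINT \<xi>|lborel. y * W \<xi> * exp (-((4*pi*\<bar>\<xi>\<bar>)*y)))"
      using AI_sq_int[OF schw ft_supp y, of I] AI_sq_int[OF schw ft_supp y, of J]
      by (simp add: W_def algebra_simps)
    finally show ?thesis .
  qed
  also have "ennreal (LINT \<xi>|lborel. y * W \<xi> * exp (-((4*pi*\<bar>\<xi>\<bar>)*y))) = (\<integral>\<^sup>+ \<xi>. ennreal (y * W \<xi> * exp (-((4*pi*\<bar>\<xi>\<bar>)*y))) \<partial>lborel)"
  proof (rule nn_integral_eq_integral[symmetric])
    show "integrable lborel (\<lambda>\<xi>. y * W \<xi> * exp (-((4*pi*\<bar>\<xi>\<bar>)*y)))"
      using AI_sq_int[OF schw ft_supp y, of I] AI_sq_int[OF schw ft_supp y, of J]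
      by (simp add: W_def algebra_simps)
  qed (use y in \<open>auto simp: W_def\<close>)
  also have "\<dots> = (\<integral>\<^sup>+ \<xi>. ennreal (indicator {0<..} y * y * W \<xi> * exp (-((4*pi*\<bar>\<xi>\<bar>)*y))) \<partial>lborel)"
    using y by simp
  finally show ?thesis .
qed


lemma main:
  fixes I J :: "int \<times> int"
  assumes onb: "L2_orthonormal_basis UNIV (psi_I \<psi>)"
  shows "set_integrable lborel upper_half_plane
           (\<lambda>z. poisson_ext (f_I \<psi> I) z * cnj (poisson_ext (f_I \<psi> J) z) * complex_of_real (Im z))
       \<and> (LINT z:upper_half_plane|lborel.
            poisson_ext (f_I \<psi> I) z * cnj (poisson_ext (f_I \<psi> J) z) * complex_of_real (Im z))
         = complex_of_real (if I = J then dlen I else 0)"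
proof -
  define H where "H = (\<lambda>z. poisson_ext (f_I \<psi> I) z * cnj (poisson_ext (f_I \<psi> J) z) * complex_of_real (Im z))"
  define Hs where "Hs = (\<lambda>z. indicator upper_half_plane z *\<^sub>R H z)"
  define W where "W = (\<lambda>\<xi>. (norm (AI \<psi> I \<xi>))^2 + (norm (AI \<psi> J \<xi>))^2)"
  define h where "h = (\<lambda>p. Hs (Complex (fst p) (snd p)))"
  have AIm[measurable]: "AI \<psi> K \<in> borel_measurable borel" for K by (rule AI_props(4)[OF schw ft_supp])
  have fm[measurable]: "f_I \<psi> K \<in> borel_measurable borel" for K by (rule fI_meas[OF schw ft_supp])
  have uhp[measurable]: "upper_half_plane \<in> sets borel"
    unfolding upper_half_plane_def by measurable
  have Hsm[measurable]: "Hs \<in> borel_measurable borel"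
    unfolding Hs_def H_def by measurable
  have hm[measurable]: "h \<in> borel_measurable (lborel \<Otimes>\<^sub>M lborel)"
    unfolding h_def using measurable_compose[OF Complex_pair_meas Hsm] by simp
  have h_eq: "h (x,y) = indicator {0<..} y *\<^sub>R (poisson_ext (f_I \<psi> I) (Complex x y) * cnj (poisson_ext (f_I \<psi> J) (Complex x y)) * complex_of_real y)" for x y
    by (simp add: h_def Hs_def H_def upper_half_plane_def indicator_def)
  have Wm[measurable]: "W \<in> borel_measurable borel" unfolding W_def by measurable
  have W0: "W \<xi> \<ge> 0" for \<xi> by (simp add: W_def)
  have fin: "(\<integral>\<^sup>+ y. (\<integral>\<^sup>+ \<xi>. ennreal (indicator {0<..} y * y * W \<xi> * exp (-((4*pi*\<bar>\<xi>\<bar>)*y))) \<partial>lborel) \<partial>lborel) < \<infinity>"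
    unfolding nn_y_xi[OF Wm W0] using W_fin[OF schw ft_supp, of I J] by (simp add: W_def)
  have hint: "integrable (lborel \<Otimes>\<^sub>M lborel) h"
  proof (rule pair_integrableI[OF hm])
    have "(\<integral>\<^sup>+ y. (\<integral>\<^sup>+ x. ennreal (norm (h (x, y))) \<partial>lborel) \<partial>lborel)
        \<le> (\<integral>\<^sup>+ y. (\<integral>\<^sup>+ \<xi>. ennreal (indicator {0<..} y * y * W \<xi> * exp (-((4*pi*\<bar>\<xi>\<bar>)*y))) \<partial>lborel) \<partial>lborel)"
      unfolding h_eq W_def by (intro nn_integral_mono xbound)
    then show "(\<integral>\<^sup>+ y. (\<integral>\<^sup>+ x. ennreal (norm (h (x, y))) \<partial>lborel) \<partial>lborel) < \<infinity>"
      using fin by (simp add: le_less_trans)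
  qed
  have case_h: "(\<lambda>(x,y). Hs (Complex x y)) = h" by (auto simp: h_def)
  have seti: "set_integrable lborel upper_half_plane H"
    unfolding set_integrable_def Hs_def[symmetric] complex_integrable_iff(1)[OF Hsm] case_h by (rule hint)
  have v1: "(LINT z:upper_half_plane|lborel. H z) = integral\<^sup>L (lborel \<Otimes>\<^sub>M lborel) h"
    unfolding set_lebesgue_integral_def Hs_def[symmetric] complex_integrable_iff(2)[OF Hsm] case_h ..
  have v2: "integral\<^sup>L (lborel \<Otimes>\<^sub>M lborel) h = (LINT y|lborel. LINT x|lborel. h (x,y))"
  proof -
    have "integrable (lborel \<Otimes>\<^sub>M lborel) (case_prod (\<lambda>x y. h (x,y)))" using hint by simp
    from lborel_pair.Fubini_integral[OF this] lborel_pair.integral_fst'[OF hint]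
    show ?thesis by simp
  qed
  define g where "g = (\<lambda>p. indicator {0<..} (snd p) *\<^sub>R (complex_of_real (snd p) * (AI \<psi> I (fst p) * cnj (AI \<psi> J (fst p)) * complex_of_real (exp (-((4*pi*\<bar>fst p\<bar>)* snd p))))))"
  have gm[measurable]: "g \<in> borel_measurable (lborel \<Otimes>\<^sub>M lborel)" unfolding g_def by measurable
  have v3: "(LINT x|lborel. h (x,y)) = (LINT \<xi>|lborel. g (\<xi>,y))" for y
  proof (cases "y > 0")
    case False then show ?thesis by (simp add: h_eq g_def indicator_def)
  next
    case y: True
    have "(LINT x|lborel. h (x,y)) = (LINT x|lborel. complex_of_real y * (poisson_ext (f_I \<psi> I) (Complex x y) * cnj (poisson_ext (f_I \<psi> J) (Complex x y))))"
      using y by (intro Bochner_Integration.integral_cong refl) (simp add: h_eq mult_ac)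
    also have "\<dots> = complex_of_real y * (LINT \<xi>|lborel. AI \<psi> I \<xi> * cnj (AI \<psi> J \<xi>) * complex_of_real (exp (-((4*pi*\<bar>\<xi>\<bar>)*y))))"
      by (simp only: integral_mult_right_zero X2(2)[OF schw ft_supp y])
    also have "\<dots> = (LINT \<xi>|lborel. g (\<xi>,y))"
      using y by (simp add: g_def)
    finally show ?thesis .
  qed
  have gint: "integrable (lborel \<Otimes>\<^sub>M lborel) g"
  proof (rule pair_integrableI[OF gm])
    have "(\<integral>\<^sup>+ y. (\<integral>\<^sup>+ \<xi>. ennreal (norm (g (\<xi>, y))) \<partial>lborel) \<partial>lborel)
        \<le> (\<integral>\<^sup>+ y. (\<integral>\<^sup>+ \<xi>. ennreal (indicator {0<..} y * y * W \<xi> * exp (-((4*pi*\<bar>\<xi>\<bar>)*y))) \<partial>lborel) \<partial>lborel)"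
    proof (intro nn_integral_mono ennreal_leI)
      fix y \<xi> :: real
      have ab: "norm (AI \<psi> I \<xi>) * norm (AI \<psi> J \<xi>) \<le> W \<xi>"
        using sum_squares_bound[of "norm (AI \<psi> I \<xi>)" "norm (AI \<psi> J \<xi>)"]
          mult_nonneg_nonneg[OF norm_ge_zero norm_ge_zero, of "AI \<psi> I \<xi>" "AI \<psi> J \<xi>"]
        unfolding W_def by linarith
      show "norm (g (\<xi>, y)) \<le> indicator {0<..} y * y * W \<xi> * exp (-((4*pi*\<bar>\<xi>\<bar>)*y))"
      proof (cases "y > 0")
        case False then show ?thesis by (simp add: g_def indicator_def)
      next
        case True
        then have "norm (g (\<xi>, y)) = y * (norm (AI \<psi> I \<xi>) * norm (AI \<psi> J \<xi>)) * exp (-((4*pi*\<bar>\<xi>\<bar>)*y))"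
          by (simp add: g_def norm_mult)
        also have "\<dots> \<le> y * W \<xi> * exp (-((4*pi*\<bar>\<xi>\<bar>)*y))"
          using True ab by (intro mult_right_mono mult_left_mono) auto
        finally show ?thesis using True by simp
      qed
    qed
    then show "(\<integral>\<^sup>+ y. (\<integral>\<^sup>+ \<xi>. ennreal (norm (g (\<xi>, y))) \<partial>lborel) \<partial>lborel) < \<infinity>"
      using fin by (simp add: le_less_trans)
  qed
  have v4: "(LINT y|lborel. LINT \<xi>|lborel. g (\<xi>,y)) = (LINT \<xi>|lborel. LINT y|lborel. g (\<xi>,y))"
  proof -
    have "integrable (lborel \<Otimes>\<^sub>M lborel) (case_prod (\<lambda>\<xi> y. g (\<xi>,y)))" using gint by simp
    from lborel_pair.Fubini_integral[OF this] show ?thesis by simp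
  qed
  have pm[measurable]: "psi_I \<psi> K \<in> borel_measurable borel" for K
    using psiI_props(1)[OF schw, where I=K] by (simp add: borel_measurable_integrable)
  let ?FI = "fourier (psi_I \<psi> I)" and ?FJ = "fourier (psi_I \<psi> J)"
  have v5: "(LINT \<xi>|lborel. LINT y|lborel. g (\<xi>,y)) = (LINT \<xi>|lborel. complex_of_real (sqrt (dlen I * dlen J)) * (?FI \<xi> * cnj (?FJ \<xi>)))"
  proof (rule integral_cong_AE)
    show "AE \<xi> in lborel. (LINT y|lborel. g (\<xi>,y)) = complex_of_real (sqrt (dlen I * dlen J)) * (?FI \<xi> * cnj (?FJ \<xi>))"
      using AE_lborel_singleton[of 0]
    proof eventually_elim
      case (elim \<xi>)
      then have b: "4*pi*\<bar>\<xi>\<bar> > 0" by simp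
      have "(LINT y|lborel. g (\<xi>,y)) = (LINT y|lborel. (AI \<psi> I \<xi> * cnj (AI \<psi> J \<xi>)) * complex_of_real (indicator {0<..} y * y * exp (-((4*pi*\<bar>\<xi>\<bar>)*y))))"
        by (intro Bochner_Integration.integral_cong refl) (simp add: g_def indicator_def mult_ac)
      also have "\<dots> = AI \<psi> I \<xi> * cnj (AI \<psi> J \<xi>) * complex_of_real (1 / (4*pi*\<bar>\<xi>\<bar>)^2)"
        by (simp only: integral_mult_right_zero integral_complex_of_real y_int(2)[OF b])
      also have "\<dots> = complex_of_real (sqrt (dlen I * dlen J)) * (?FI \<xi> * cnj (?FJ \<xi>))"
        using elim by (rule AI_prod[OF schw ft_supp])
      finally show ?case .
    qed
  qed (measurable)
  have v6: "(LINT \<xi>|lborel. complex_of_real (sqrt (dlen I * dlen J)) * (?FI \<xi> * cnj (?FJ \<xi>)))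
      = complex_of_real (sqrt (dlen I * dlen J)) * L2_inner (psi_I \<psi> I) (psi_I \<psi> J)"
  proof -
    note pI = psiI_props[OF schw, where I=I] and pJ = psiI_props[OF schw, where I=J]
    obtain M where M: "\<And>x. norm (psi_I \<psi> I x) \<le> M" using pI(3) by blast
    obtain M' where M': "\<And>x. norm (psi_I \<psi> J x) \<le> M'" using pJ(3) by blast
    show ?thesis unfolding integral_mult_right_zero L2_inner_def
      by (simp only: parseval_fourier[OF pI(1) pI(2) M pJ(1) pJ(2) M'])
  qed
  have v7: "L2_inner (psi_I \<psi> I) (psi_I \<psi> J) = (if I = J then 1 else 0)"
    using onb unfolding L2_orthonormal_basis_def by blast
  have "(LINT z:upper_half_plane|lborel. H z) = complex_of_real (if I = J then dlen I else 0)"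
    unfolding v1 v2 v3 v4 v5 v6 v7 using dlen_pos[of I] by auto
  with seti show ?thesis unfolding H_def by simp
qed

end

theorem lemma9:
  fixes \<psi> :: "real \<Rightarrow> complex" and I J :: "int \<times> int"
  assumes schw: "schwartz \<psi>"
    and even: "\<forall>x. \<psi> (- x) = \<psi> x"
    and ft_nonneg: "\<forall>\<xi>. fourier \<psi> \<xi> \<in> \<real> \<and> 0 \<le> Re (fourier \<psi> \<xi>)"
    and ft_supp: "closure {\<xi>. fourier \<psi> \<xi> \<noteq> 0} \<subseteq> {-4/3..-1/3} \<union> {1/3..4/3}"
    and ft_pos: "\<forall>\<xi>\<in>{3/8..5/4}. 0 < Re (fourier \<psi> \<xi>)"
    and onb: "L2_orthonormal_basis UNIV (psi_I \<psi>)"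
  shows "set_integrable lborel upper_half_plane
           (\<lambda>z. poisson_ext (f_I \<psi> I) z * cnj (poisson_ext (f_I \<psi> J) z) * complex_of_real (Im z))
       \<and> (LINT z:upper_half_plane|lborel.
            poisson_ext (f_I \<psi> I) z * cnj (poisson_ext (f_I \<psi> J) z) * complex_of_real (Im z))
         = complex_of_real (if I = J then dlen I else 0)"
    using main[OF schw ft_supp onb] .

end
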